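(* Let $K$ be a field of characteristic $0$, $S=K[x_1,\dots,x_n]$, and let $I,J\subset S$ be Borel-fixed ideals, where $I$ has minimal monomial generators $f_1,\dots,f_m$ all of the same degree. Fix $t$ and write $$\operatorname{in}_>(Z_t(I,S/J))=\bigoplus_{{\bf u}\subset[m],\ \#{\bf u}=t} e_{\bf u}\otimes L_{\bf u}/J$$ with $L_{\bf u}\supseteq J$ monomial ideals. Then each $L_{\bf u}$ is Borel-fixed.
   Context: A monomial ideal is Borel-fixed if it is invariant under all invertible upper triangular linear changes of coordinates, equivalently (characteristic $0$): for every monomial $fx_j$ in the ideal and every $i<j$, $fx_i$ is in the ideal. Let $F=\bigoplus_{i=1}^m S(-\deg f_i)$ with basis $e_1,\dots,e_m$, $\phi(e_i)=f_i$; $K(I,S/J)=\bigwedge^\bullet F\otimes_S S/J$ is the Koszul complex (differential induced by $\phi$), and $Z_t(I,S/J)$ its module of cycles in position $t$. For ${\bf u}=\{u_1<\dots<u_t\}\subset[m]$, $e_{\bf u}=e_{u_1}\wedge\cdots\wedge e_{u_t}$. Term order: $>_{\rm rev}$ is the degree reverse lexicographic order with $x_1>\cdots>x_n$. For $i_1<\cdots<i_t$, $j_1<\cdots<j_t$, set $e_{i_1}\wedge\cdots\wedge e_{i_t}\succ e_{j_1}\wedge\cdots\wedge e_{j_t}$ if (i) $f_{i_1}\cdots f_{i_t}<_{\rm rev}f_{j_1}\cdots f_{j_t}$, or (ii) $f_{i_1}\cdots f_{i_t}=f_{j_1}\cdots f_{j_t}$ and $x_{i_1}\cdots x_{i_t}>_{\rm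 rev}x_{j_1}\cdots x_{j_t}$ (the index sets compared as monomials in formal variables $x_1>x_2>\cdots$ by degree reverse lex). On terms $e_{\bf u}v$ ($v$ a monomial) set $e_{\bf u}v>e_{{\bf u}'}v'$ if $e_{\bf u}\succ e_{{\bf u}'}$, or $e_{\bf u}=e_{{\bf u}'}$ and $v>_{\rm rev}v'$. Every element of $K_t(I,S/J)$ is uniquely a $K$-linear combination of terms $e_{\bf u}\otimes(v+J)$ with $v$ a monomial not in $J$; its initial term $\operatorname{in}_>(g)$ is the largest such term occurring, and $\operatorname{in}_>(N)$ for a submodule $N$ is the $S$-submodule generated by all $\operatorname{in}_>(g)$, $g\in N$; for $N=Z_t(I,S/J)$ it decomposes as displayed, where $L_{\bf u}$ is the ideal generated by $J$ and the monomials $v$ with $e_{\bf u}\otimes(v+J)\in \operatorname{in}_>(N)$. *)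

theory Defs
  imports Main "HOL-Library.Poly_Mapping"
begin

text \<open>Monomials in variables x_1,...,x_n are exponent vectors nat =>0 nat
  (support in 1..n); polynomials over the field 'a are finitely supported maps
  from monomials to 'a, with the convolution (polynomial) product.\<close>

type_synonym mon = "nat \<Rightarrow>\<^sub>0 nat"
type_synonym 'a mpoly = "mon \<Rightarrow>\<^sub>0 'a"

definition is_mon :: "nat \<Rightarrow> mon \<Rightarrow> bool" where
  "is_mon n v \<longleftrightarrow> Poly_Mapping.keys v \<subseteq> {1..n}"

definition var :: "nat \<Rightarrow> mon" where
  "var i = Poly_Mapping.single i 1"

definition mdeg :: "mon \<Rightarrow> nat" where
  "mdeg v = (\<Sum>k\<in>Poly_Mapping.keys v. Poly_Mapping.lookup v k)"

definition mdvd :: "mon \<Rightarrow> mon \<Rightarrow> bool" where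
  "mdvd v w \<longleftrightarrow> (\<exists>u. w = v + u)"

definition monom :: "mon \<Rightarrow> 'a::comm_ring_1 mpoly" where
  "monom v = Poly_Mapping.single v 1"

definition polyS :: "nat \<Rightarrow> 'a::comm_ring_1 mpoly set" where
  "polyS n = {p. \<forall>v\<in>Poly_Mapping.keys p. is_mon n v}"

definition is_ideal :: "nat \<Rightarrow> 'a::comm_ring_1 mpoly set \<Rightarrow> bool" where
  "is_ideal n I \<longleftrightarrow> I \<subseteq> polyS n \<and> 0 \<in> I \<and> (\<forall>p\<in>I. \<forall>q\<in>I. p + q \<in> I)
      \<and> (\<forall>s\<in>polyS n. \<forall>p\<in>I. s * p \<in> I)"

inductive_set ideal_gen :: "nat \<Rightarrow> 'a::comm_ring_1 mpoly set \<Rightarrow> 'a mpoly set"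
  for n :: nat and G :: "'a mpoly set" where
  ig_zero: "0 \<in> ideal_gen n G"
| ig_gen: "p \<in> G \<Longrightarrow> p \<in> ideal_gen n G"
| ig_add: "p \<in> ideal_gen n G \<Longrightarrow> q \<in> ideal_gen n G \<Longrightarrow> p + q \<in> ideal_gen n G"
| ig_mult: "s \<in> polyS n \<Longrightarrow> p \<in> ideal_gen n G \<Longrightarrow> s * p \<in> ideal_gen n G"

definition monomial_ideal :: "nat \<Rightarrow> 'a::comm_ring_1 mpoly set \<Rightarrow> bool" where
  "monomial_ideal n I \<longleftrightarrow> is_ideal n I \<and> (\<forall>p\<in>I. \<forall>v\<in>Poly_Mapping.keys p. monom v \<in> I)"

text \<open>Borel-fixed monomial ideal (characteristic 0 combinatorial characterization):
  f x_j \<in> I and i < j imply f x_i \<in> I.\<close>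
definition borel_fixed :: "nat \<Rightarrow> 'a::comm_ring_1 mpoly set \<Rightarrow> bool" where
  "borel_fixed n I \<longleftrightarrow> monomial_ideal n I \<and>
     (\<forall>v i j. is_mon n v \<longrightarrow> 1 \<le> i \<longrightarrow> i < j \<longrightarrow> j \<le> n \<longrightarrow>
        monom (v + var j) \<in> I \<longrightarrow> monom (v + var i) \<in> I)"

text \<open>Degree reverse lexicographic order with x_1 > x_2 > ...: strict "greater".\<close>
definition revlex_gt :: "mon \<Rightarrow> mon \<Rightarrow> bool" where
  "revlex_gt v w \<longleftrightarrow> mdeg v > mdeg w \<or>
     (mdeg v = mdeg w \<and> v \<noteq> w \<and>
        Poly_Mapping.lookup v (Max {k. Poly_Mapping.lookup v k \<noteq> Poly_Mapping.lookup w k}) < Poly_Mapping.lookup w (Max {k. Poly_Mapping.lookup v k \<noteq> Poly_Mapping.lookup w k}))"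

definition fprod :: "(nat \<Rightarrow> mon) \<Rightarrow> nat set \<Rightarrow> mon" where
  "fprod f u = (\<Sum>i\<in>u. f i)"

definition sqmon :: "nat set \<Rightarrow> mon" where
  "sqmon u = (\<Sum>i\<in>u. var i)"

definition e_gt :: "(nat \<Rightarrow> mon) \<Rightarrow> nat set \<Rightarrow> nat set \<Rightarrow> bool" where
  "e_gt f u u' \<longleftrightarrow> revlex_gt (fprod f u') (fprod f u) \<or>
     (fprod f u = fprod f u' \<and> revlex_gt (sqmon u) (sqmon u'))"

definition term_gt :: "(nat \<Rightarrow> mon) \<Rightarrow> nat set \<times> mon \<Rightarrow> nat set \<times> mon \<Rightarrow> bool" where
  "term_gt f a b \<longleftrightarrow> e_gt f (fst a) (fst b) \<or> (fst a = fst b \<and> revlex_gt (snd a) (snd b))"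

text \<open>Elements of K_t(I,S/J) are represented by their unique normal form:
  a map u \<mapsto> (polynomial with no monomial in J), supported on t-subsets of [m].
  nf J p drops the monomials of p lying in J (the canonical representative mod J).\<close>
definition nf :: "'a::comm_ring_1 mpoly set \<Rightarrow> 'a mpoly \<Rightarrow> 'a mpoly" where
  "nf J p = (\<Sum>v\<in>{v\<in>Poly_Mapping.keys p. monom v \<notin> J}. Poly_Mapping.single v (Poly_Mapping.lookup p v))"

type_synonym 'a kelem = "nat set \<Rightarrow> 'a mpoly"

definition koszul :: "nat \<Rightarrow> nat \<Rightarrow> 'a::comm_ring_1 mpoly set \<Rightarrow> nat \<Rightarrow> 'a kelem set" where
  "koszul n m J t = {g. (\<forall>u. \<not> (u \<subseteq> {1..m} \<and> card u = t) \<longrightarrow> g u = 0) \<and>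
      (\<forall>u. g u \<in> polyS n \<and> nf J (g u) = g u)}"

text \<open>Koszul differential: e_u \<mapsto> sum_k (-1)^(k-1) f_(u_k) e_(u - u_k), reduced mod J.\<close>
definition kdiff :: "nat \<Rightarrow> (nat \<Rightarrow> mon) \<Rightarrow> 'a::comm_ring_1 mpoly set \<Rightarrow> 'a kelem \<Rightarrow> 'a kelem" where
  "kdiff m f J g = (\<lambda>w. nf J (\<Sum>i\<in>{1..m} - w.
       (-1) ^ card {j\<in>w. j < i} * monom (f i) * g (insert i w)))"

definition cycles :: "nat \<Rightarrow> nat \<Rightarrow> (nat \<Rightarrow> mon) \<Rightarrow> 'a::comm_ring_1 mpoly set \<Rightarrow> nat \<Rightarrow> 'a kelem set" where
  "cycles n m f J t = {g \<in> koszul n m J t. kdiff m f J g = (\<lambda>_. 0)}"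

definition kterms :: "'a::comm_ring_1 kelem \<Rightarrow> (nat set \<times> mon) set" where
  "kterms g = {(u, v). Poly_Mapping.lookup (g u) v \<noteq> 0}"

definition init_term :: "(nat \<Rightarrow> mon) \<Rightarrow> 'a::comm_ring_1 kelem \<Rightarrow> nat set \<times> mon" where
  "init_term f g = (THE a. a \<in> kterms g \<and> (\<forall>b\<in>kterms g. b \<noteq> a \<longrightarrow> term_gt f a b))"

definition term_elem :: "'a::comm_ring_1 mpoly set \<Rightarrow> nat set \<times> mon \<Rightarrow> 'a kelem" where
  "term_elem J a = (\<lambda>u. if u = fst a then nf J (monom (snd a)) else 0)"

definition ksmult :: "'a::comm_ring_1 mpoly set \<Rightarrow> 'a mpoly \<Rightarrow> 'a kelem \<Rightarrow> 'a kelem" where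
  "ksmult J s g = (\<lambda>u. nf J (s * g u))"

inductive_set submod_gen :: "nat \<Rightarrow> 'a::comm_ring_1 mpoly set \<Rightarrow> 'a kelem set \<Rightarrow> 'a kelem set"
  for n :: nat and J :: "'a mpoly set" and G :: "'a kelem set" where
  sg_zero: "(\<lambda>_. 0) \<in> submod_gen n J G"
| sg_gen: "g \<in> G \<Longrightarrow> g \<in> submod_gen n J G"
| sg_add: "g \<in> submod_gen n J G \<Longrightarrow> h \<in> submod_gen n J G \<Longrightarrow> (\<lambda>u. g u + h u) \<in> submod_gen n J G"
| sg_mult: "s \<in> polyS n \<Longrightarrow> g \<in> submod_gen n J G \<Longrightarrow> ksmult J s g \<in> submod_gen n J G"

definition init_module :: "nat \<Rightarrow> (nat \<Rightarrow> mon) \<Rightarrow> 'a::comm_ring_1 mpoly set \<Rightarrow> 'a kelem set \<Rightarrow> 'a kelem set" where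
  "init_module n f J N = submod_gen n J {term_elem J (init_term f g) | g. g \<in> N \<and> g \<noteq> (\<lambda>_. 0)}"

definition L_ideal :: "nat \<Rightarrow> (nat \<Rightarrow> mon) \<Rightarrow> 'a::comm_ring_1 mpoly set \<Rightarrow> 'a kelem set \<Rightarrow> nat set \<Rightarrow> 'a mpoly set" where
  "L_ideal n f J N u = ideal_gen n (J \<union> {monom v | v. is_mon n v \<and> term_elem J (u, v) \<in> init_module n f J N})"

end

theory Submission
  imports Defs
begin


lemma pm_expand: "p = (\<Sum>k\<in>Poly_Mapping.keys p. Poly_Mapping.single k (Poly_Mapping.lookup p k))"
proof (rule poly_mapping_eqI)
  fix x
  show "Poly_Mapping.lookup p x = Poly_Mapping.lookup (\<Sum>k\<in>Poly_Mapping.keys p. Poly_Mapping.single k (Poly_Mapping.lookup p k)) x"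
    by (simp add: lookup_sum lookup_single when_def in_keys_iff sum.If_cases)
qed

lemma single_mult_expand:
  "Poly_Mapping.single a c * (q::'b::comm_ring_1 mpoly) = (\<Sum>k\<in>Poly_Mapping.keys q. Poly_Mapping.single (a+k) (c * Poly_Mapping.lookup q k))"
proof -
  have "Poly_Mapping.single a c * q = Poly_Mapping.single a c * (\<Sum>k\<in>Poly_Mapping.keys q. Poly_Mapping.single k (Poly_Mapping.lookup q k))"
    by (subst pm_expand[of q]) simp
  also have "\<dots> = (\<Sum>k\<in>Poly_Mapping.keys q. Poly_Mapping.single (a+k) (c * Poly_Mapping.lookup q k))"
    by (simp add: sum_distrib_left mult_single)
  finally show ?thesis .
qed

lemma mdvd_refl[simp]: "mdvd a a"
  unfolding mdvd_def by (rule exI[of _ 0]) simp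

lemma mdvd_add_right: "mdvd a (a + b)"
  unfolding mdvd_def by blast

lemma mdvd_add_left: "mdvd a (b + a)"
  unfolding mdvd_def by (metis add.commute)

lemma mdvd_trans: "mdvd a b \<Longrightarrow> mdvd b c \<Longrightarrow> mdvd a c"
  unfolding mdvd_def by (metis add.assoc)

lemma mdvd_mono: "mdvd a b \<Longrightarrow> mdvd a (b + c)"
  unfolding mdvd_def by (metis add.assoc)

lemma mdvd_add_mono: "mdvd a b \<Longrightarrow> mdvd (a + c) (b + c)"
  unfolding mdvd_def by (metis add.assoc add.commute)

lemma mdvd_cancel: "mdvd (a + x) (b + x) \<Longrightarrow> mdvd a (b::mon)"
  unfolding mdvd_def by (metis add.assoc add.commute add_right_cancel)

lemma mdvd_diff: "mdvd a b \<Longrightarrow> a + (b - a) = (b::mon)"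
  unfolding mdvd_def by auto

lemma lookup_single_mult:
  "Poly_Mapping.lookup (Poly_Mapping.single a c * (q::'b::comm_ring_1 mpoly)) r =
     (if mdvd a r then c * Poly_Mapping.lookup q (r - a) else 0)"
proof (cases "mdvd a r")
  case True
  then obtain s where r: "r = a + s" unfolding mdvd_def by blast
  have "Poly_Mapping.lookup (Poly_Mapping.single a c * q) r =
     (\<Sum>k\<in>Poly_Mapping.keys q. (c * Poly_Mapping.lookup q k when a + k = r))"
    by (simp add: single_mult_expand lookup_sum lookup_single)
  also have "\<dots> = (\<Sum>k\<in>Poly_Mapping.keys q. (if k = s then c * Poly_Mapping.lookup q k else 0))"
    by (rule sum.cong) (auto simp: r when_def)
  also have "\<dots> = c * Poly_Mapping.lookup q s"
    by (auto simp: in_keys_iff)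
  finally show ?thesis using True r by simp
next
  case False
  have "Poly_Mapping.lookup (Poly_Mapping.single a c * q) r =
     (\<Sum>k\<in>Poly_Mapping.keys q. (c * Poly_Mapping.lookup q k when a + k = r))"
    by (simp add: single_mult_expand lookup_sum lookup_single)
  also have "\<dots> = 0"
    using False by (intro sum.neutral) (auto simp: mdvd_def when_def)
  finally show ?thesis using False by simp
qed

lemma lookup_monom_mult:
  "Poly_Mapping.lookup (monom a * (q::'b::comm_ring_1 mpoly)) r =
     (if mdvd a r then Poly_Mapping.lookup q (r - a) else 0)"
  unfolding monom_def by (simp add: lookup_single_mult)

lemma lookup_nf:
  "Poly_Mapping.lookup (nf J p) v = (if monom v \<in> J then 0 else Poly_Mapping.lookup p v)"
proof -
  have "Poly_Mapping.lookup (nf J p) v = (\<Sum>x\<in>{v \<in> Poly_Mapping.keys p. monom v \<notin> J}. (Poly_Mapping.lookup p x when x = v))"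
    by (simp add: nf_def lookup_sum lookup_single)
  also have "\<dots> = (\<Sum>x\<in>{v \<in> Poly_Mapping.keys p. monom v \<notin> J}. (if x = v then Poly_Mapping.lookup p x else 0))"
    by (rule sum.cong) (auto simp: when_def)
  also have "\<dots> = (if monom v \<in> J then 0 else Poly_Mapping.lookup p v)"
    by (auto simp: in_keys_iff)
  finally show ?thesis .
qed

lemma nf_add: "nf J (p + q) = nf J p + nf J q"
  by (rule poly_mapping_eqI) (simp add: lookup_nf lookup_add)

lemma nf_zero[simp]: "nf J 0 = 0"
  by (rule poly_mapping_eqI) (simp add: lookup_nf)

lemma nf_sum: "nf J (sum g A) = (\<Sum>x\<in>A. nf J (g x))"
  by (induction A rule: infinite_finite_induct) (auto simp: nf_add)

lemma nf_single: "nf J (Poly_Mapping.single v c) = (if monom v \<in> J then 0 else Poly_Mapping.single v c)"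
  by (rule poly_mapping_eqI) (auto simp: lookup_nf lookup_single when_def)

lemma keys_nf: "Poly_Mapping.keys (nf J p) \<subseteq> Poly_Mapping.keys p"
  by (auto simp: in_keys_iff lookup_nf split: if_splits)

lemma in_keys_nf: "v \<in> Poly_Mapping.keys (nf J p) \<Longrightarrow> monom v \<notin> J"
  by (auto simp: in_keys_iff lookup_nf split: if_splits)

lemma keys_add_nat: "Poly_Mapping.keys (a + b) = Poly_Mapping.keys a \<union> Poly_Mapping.keys (b::mon)"
  by (auto simp: in_keys_iff lookup_add)

lemma keys_minus_nat: "Poly_Mapping.keys (a - b) \<subseteq> Poly_Mapping.keys (a::mon)"
  by (auto simp: in_keys_iff lookup_minus)

lemma is_mon_add[simp]: "is_mon n (a + b) \<longleftrightarrow> is_mon n a \<and> is_mon n b"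
  by (auto simp: is_mon_def keys_add_nat)

lemma is_mon_minus: "is_mon n a \<Longrightarrow> is_mon n (a - b)"
  using keys_minus_nat unfolding is_mon_def by blast

lemma keys_var[simp]: "Poly_Mapping.keys (var i) = {i}"
  by (simp add: var_def)

lemma lookup_var: "Poly_Mapping.lookup (var i) k = (if k = i then 1 else 0)"
  by (simp add: var_def lookup_single)

lemma is_mon_var[simp]: "is_mon n (var i) \<longleftrightarrow> 1 \<le> i \<and> i \<le> n"
  by (simp add: is_mon_def)

lemma is_mon_zero[simp]: "is_mon n 0"
  by (simp add: is_mon_def)

lemma is_mon_mdvd: "mdvd a b \<Longrightarrow> is_mon n b \<Longrightarrow> is_mon n a"
  unfolding mdvd_def by auto

lemma mdeg_eq: "finite K \<Longrightarrow> Poly_Mapping.keys v \<subseteq> K \<Longrightarrow> mdeg v = sum (Poly_Mapping.lookup v) K"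
  unfolding mdeg_def
  by (rule sum.mono_neutral_left) (auto simp: in_keys_iff)

lemma mdeg_add: "mdeg (a + b) = mdeg a + mdeg b"
proof -
  let ?K = "Poly_Mapping.keys a \<union> Poly_Mapping.keys b"
  have "mdeg (a+b) = sum (Poly_Mapping.lookup (a+b)) ?K" by (rule mdeg_eq) (auto simp: keys_add_nat)
  moreover have "mdeg a = sum (Poly_Mapping.lookup a) ?K" by (rule mdeg_eq) auto
  moreover have "mdeg b = sum (Poly_Mapping.lookup b) ?K" by (rule mdeg_eq) auto
  ultimately show ?thesis by (simp add: lookup_add sum.distrib)
qed

lemma mdeg_zero_iff: "mdeg a = 0 \<longleftrightarrow> a = 0"
  unfolding mdeg_def by (auto simp: in_keys_iff intro!: poly_mapping_eqI)

lemma mdeg_var[simp]: "mdeg (var i) = 1"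
  by (simp add: mdeg_def lookup_var)

lemma mdvd_eq_deg: "mdvd a b \<Longrightarrow> mdeg a = mdeg b \<Longrightarrow> a = b"
  unfolding mdvd_def by (auto simp: mdeg_add mdeg_zero_iff)

lemma monom_mult: "(monom a :: 'b::comm_ring_1 mpoly) * monom b = monom (a + b)"
  by (simp add: monom_def mult_single)

lemma keys_monom[simp]: "Poly_Mapping.keys (monom v :: 'b::comm_ring_1 mpoly) = {v}"
  by (simp add: monom_def)

lemma monom_polyS[simp]: "(monom v :: 'b::comm_ring_1 mpoly) \<in> polyS n \<longleftrightarrow> is_mon n v"
  by (simp add: polyS_def)

lemma polyS_mult: "p \<in> polyS n \<Longrightarrow> q \<in> polyS n \<Longrightarrow> p * q \<in> polyS n"
  unfolding polyS_def using keys_mult by fastforce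

lemma polyS_add: "p \<in> polyS n \<Longrightarrow> q \<in> polyS n \<Longrightarrow> p + q \<in> polyS n"
  unfolding polyS_def using keys_add by fastforce

lemma polyS_zero[simp]: "0 \<in> polyS n"
  unfolding polyS_def by simp

lemma lookup_var_add_pos: "Poly_Mapping.lookup (a + var j) j \<ge> 1"
  by (simp add: lookup_add lookup_var)

lemma split_var: "Poly_Mapping.lookup a j \<ge> 1 \<Longrightarrow> \<exists>b. a = b + var j"
  by (rule exI[of _ "a - var j"]) (rule poly_mapping_eqI, simp add: lookup_add lookup_minus lookup_var)



lemma ideal_gen_char:
  assumes G: "\<forall>g\<in>G. g \<in> polyS n \<and> (\<forall>v\<in>Poly_Mapping.keys g. P v)"
      and up: "\<forall>v s. P v \<longrightarrow> is_mon n s \<longrightarrow> P (s + v)"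
    and p: "p \<in> ideal_gen n G"
  shows "p \<in> polyS n \<and> (\<forall>v\<in>Poly_Mapping.keys p. P v)"
  using p
proof (induction rule: ideal_gen.induct)
  case ig_zero
  then show ?case by simp
next
  case (ig_gen p)
  then show ?case using G by blast
next
  case (ig_add p q)
  then show ?case using keys_add[of p q] by (auto intro: polyS_add)
next
  case (ig_mult s p)
  have "\<forall>v\<in>Poly_Mapping.keys (s * p). P v"
  proof
    fix v assume "v \<in> Poly_Mapping.keys (s * p)"
    then obtain a b where "v = a + b" "a \<in> Poly_Mapping.keys s" "b \<in> Poly_Mapping.keys p"
      using keys_mult by blast
    moreover have "is_mon n a" using ig_mult.hyps \<open>a \<in> _\<close> unfolding polyS_def by blast
    ultimately show "P v" using up ig_mult.IH by blast
  qed
  then show ?case using ig_mult polyS_mult by blast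
qed

definition Pgen :: "'b::comm_ring_1 mpoly set \<Rightarrow> mon set \<Rightarrow> mon \<Rightarrow> bool" where
  "Pgen J W v \<longleftrightarrow> monom v \<in> J \<or> (\<exists>w\<in>W. mdvd w v)"

locale jset =
  fixes n :: nat and J :: "'b::comm_ring_1 mpoly set"
  assumes J_poly: "\<forall>g\<in>J. g \<in> polyS n \<and> (\<forall>v\<in>Poly_Mapping.keys g. monom v \<in> J)"
    and J_up: "\<forall>v s. monom v \<in> J \<longrightarrow> is_mon n s \<longrightarrow> monom (s + v) \<in> J"
begin

lemma gen_char:
  assumes W: "\<forall>w\<in>W. is_mon n w" and p: "p \<in> ideal_gen n (J \<union> monom ` W)"
  shows "p \<in> polyS n \<and> (\<forall>v\<in>Poly_Mapping.keys p. Pgen J W v)"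
proof (rule ideal_gen_char[OF _ _ p])
  show "\<forall>g\<in>J \<union> monom ` W. g \<in> polyS n \<and> (\<forall>v\<in>Poly_Mapping.keys g. Pgen J W v)"
    using J_poly W by (auto simp: Pgen_def intro: bexI[of _ _ W] mdvd_refl)
  show "\<forall>v s. Pgen J W v \<longrightarrow> is_mon n s \<longrightarrow> Pgen J W (s + v)"
  proof (intro allI impI)
    fix v s assume P: "Pgen J W v" and s: "is_mon n s"
    show "Pgen J W (s + v)"
    proof (cases "monom v \<in> J")
      case True
      then show ?thesis using J_up s unfolding Pgen_def by blast
    next
      case False
      then obtain w where w: "w \<in> W" "mdvd w v" using P unfolding Pgen_def by blast
      then have "mdvd w (s + v)" using mdvd_mono[of w v s] by (simp add: add.commute)
      then show ?thesis using w(1) unfolding Pgen_def by blast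
    qed
  qed
qed

lemma monom_in_gen_D:
  assumes W: "\<forall>w\<in>W. is_mon n w" and p: "monom v \<in> ideal_gen n (J \<union> monom ` W)"
  shows "Pgen J W v"
  using gen_char[OF W p] by simp

lemma monom_in_gen_I:
  assumes v: "is_mon n v" and P: "Pgen J W v"
  shows "monom v \<in> ideal_gen n (J \<union> monom ` W)"
proof -
  { assume "monom v \<in> J" then have ?thesis by (auto intro: ideal_gen.ig_gen) }
  moreover
  { fix w assume w: "w \<in> W" "mdvd w v"
    then obtain s where s: "v = w + s" unfolding mdvd_def by blast
    then have "is_mon n s" using v by simp
    moreover have "monom w \<in> ideal_gen n (J \<union> monom ` W)"
      using w by (auto intro: ideal_gen.ig_gen)
    ultimately have "monom s * monom w \<in> ideal_gen n (J \<union> monom ` W)"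
      by (auto intro: ideal_gen.ig_mult)
    then have ?thesis by (simp add: monom_mult s add.commute) }
  ultimately show ?thesis using P unfolding Pgen_def by blast
qed

end

lemma monomial_ideal_jset:
  fixes J :: "'b::comm_ring_1 mpoly set"
  assumes "monomial_ideal n J" shows "jset n J"
proof
  show "\<forall>g\<in>J. g \<in> polyS n \<and> (\<forall>v\<in>Poly_Mapping.keys g. monom v \<in> J)"
    using assms unfolding monomial_ideal_def is_ideal_def by blast
  show "\<forall>v s. monom v \<in> J \<longrightarrow> is_mon n s \<longrightarrow> monom (s + v) \<in> J"
  proof (intro allI impI)
    fix v s assume v: "monom v \<in> J" and s: "is_mon n s"
    have "(monom s :: 'b mpoly) \<in> polyS n" using s by simp
    then have "monom s * monom v \<in> J" using assms v unfolding monomial_ideal_def is_ideal_def by blast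
    then show "monom (s + v) \<in> J" by (simp add: monom_mult)
  qed
qed

lemma empty_jset: "jset n {}"
  by unfold_locales auto

lemma ideal_gen_ideal:
  assumes "jset n J" "\<forall>w\<in>W. is_mon n w"
  shows "monomial_ideal n (ideal_gen n (J \<union> monom ` W))"
  unfolding monomial_ideal_def is_ideal_def
proof (intro conjI ballI)
  show "ideal_gen n (J \<union> monom ` W) \<subseteq> polyS n"
    using jset.gen_char[OF assms] by blast
  show "0 \<in> ideal_gen n (J \<union> monom ` W)" by (rule ideal_gen.ig_zero)
  show "p + q \<in> ideal_gen n (J \<union> monom ` W)" if "p \<in> ideal_gen n (J \<union> monom ` W)" "q \<in> ideal_gen n (J \<union> monom ` W)" for p q
    using that by (rule ideal_gen.ig_add)
  show "s * p \<in> ideal_gen n (J \<union> monom ` W)" if "s \<in> polyS n" "p \<in> ideal_gen n (J \<union> monom ` W)" for s p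
    using that by (rule ideal_gen.ig_mult)
  fix p v assume p: "p \<in> ideal_gen n (J \<union> monom ` W)" and v: "v \<in> Poly_Mapping.keys p"
  have "Pgen J W v" "is_mon n v" using jset.gen_char[OF assms p] v unfolding polyS_def by auto
  then show "monom v \<in> ideal_gen n (J \<union> monom ` W)"
    using jset.monom_in_gen_I[OF assms(1)] by blast
qed



lemma diffset_finite: "finite {k. Poly_Mapping.lookup v k \<noteq> Poly_Mapping.lookup (w::mon) k}"
  by (rule finite_subset[of _ "Poly_Mapping.keys v \<union> Poly_Mapping.keys w"]) (auto simp: in_keys_iff)

lemma diffset_ne: "v \<noteq> w \<Longrightarrow> {k. Poly_Mapping.lookup v k \<noteq> Poly_Mapping.lookup (w::mon) k} \<noteq> {}"
proof
  assume ne: "v \<noteq> w" and e: "{k. Poly_Mapping.lookup v k \<noteq> Poly_Mapping.lookup w k} = {}"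
  have "v = w"
  proof (rule poly_mapping_eqI)
    fix k show "Poly_Mapping.lookup v k = Poly_Mapping.lookup w k" using e by blast
  qed
  then show False using ne by simp
qed

lemma revlex_gt_iff: "revlex_gt v w \<longleftrightarrow> mdeg v > mdeg w \<or> (mdeg v = mdeg w \<and>
   (\<exists>k. Poly_Mapping.lookup v k < Poly_Mapping.lookup w k \<and> (\<forall>k'>k. Poly_Mapping.lookup v k' = Poly_Mapping.lookup w k')))"
  (is "?L \<longleftrightarrow> ?R")
proof
  assume ?L
  show ?R
  proof (cases "mdeg v > mdeg w")
    case False
    have X: "mdeg v > mdeg w \<or> (mdeg v = mdeg w \<and> v \<noteq> w \<and>
        Poly_Mapping.lookup v (Max {k. Poly_Mapping.lookup v k \<noteq> Poly_Mapping.lookup w k}) < Poly_Mapping.lookup w (Max {k. Poly_Mapping.lookup v k \<noteq> Poly_Mapping.lookup w k}))"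
      using \<open>?L\<close> unfolding revlex_gt_def .
    then have Y: "mdeg v = mdeg w \<and> v \<noteq> w \<and>
        Poly_Mapping.lookup v (Max {k. Poly_Mapping.lookup v k \<noteq> Poly_Mapping.lookup w k}) < Poly_Mapping.lookup w (Max {k. Poly_Mapping.lookup v k \<noteq> Poly_Mapping.lookup w k})"
      using False by (meson)
    then have eq: "mdeg v = mdeg w" "v \<noteq> w" and
      lt: "Poly_Mapping.lookup v (Max {k. Poly_Mapping.lookup v k \<noteq> Poly_Mapping.lookup w k}) < Poly_Mapping.lookup w (Max {k. Poly_Mapping.lookup v k \<noteq> Poly_Mapping.lookup w k})"
      by (rule conjunct1, rule conjunct1[OF conjunct2], rule conjunct2[OF conjunct2])
    have "\<forall>k'>Max {k. Poly_Mapping.lookup v k \<noteq> Poly_Mapping.lookup w k}. Poly_Mapping.lookup v k' = Poly_Mapping.lookup w k'"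
    proof (intro allI impI)
      fix k' assume "Max {k. Poly_Mapping.lookup v k \<noteq> Poly_Mapping.lookup w k} < k'"
      then have "k' \<notin> {k. Poly_Mapping.lookup v k \<noteq> Poly_Mapping.lookup w k}"
        using Max_ge[OF diffset_finite[of v w], of k'] by linarith
      then show "Poly_Mapping.lookup v k' = Poly_Mapping.lookup w k'" by simp
    qed
    then show ?thesis using eq lt by blast
  qed simp
next
  assume ?R
  show ?L
  proof (cases "mdeg v > mdeg w")
    case False
    have "mdeg v = mdeg w \<and> (\<exists>k. Poly_Mapping.lookup v k < Poly_Mapping.lookup w k \<and> (\<forall>k'>k. Poly_Mapping.lookup v k' = Poly_Mapping.lookup w k'))"
      using \<open>?R\<close> False by blast
    then obtain k where eq: "mdeg v = mdeg w" and k: "Poly_Mapping.lookup v k < Poly_Mapping.lookup w k"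
      "\<forall>k'>k. Poly_Mapping.lookup v k' = Poly_Mapping.lookup w k'" by blast
    have M: "Max {k. Poly_Mapping.lookup v k \<noteq> Poly_Mapping.lookup w k} = k"
    proof (rule Max_eqI[OF diffset_finite])
      show "y \<le> k" if "y \<in> {k. Poly_Mapping.lookup v k \<noteq> Poly_Mapping.lookup w k}" for y
      proof (rule ccontr)
        assume "\<not> y \<le> k"
        then have "y > k" by simp
        then have "Poly_Mapping.lookup v y = Poly_Mapping.lookup w y" using k(2) by blast
        then show False using that by simp
      qed
      show "k \<in> {k. Poly_Mapping.lookup v k \<noteq> Poly_Mapping.lookup w k}" using k(1) by simp
    qed
    have ne: "v \<noteq> w" using k(1) by (metis less_irrefl)
    have "Poly_Mapping.lookup v (Max {k. Poly_Mapping.lookup v k \<noteq> Poly_Mapping.lookup w k}) < Poly_Mapping.lookup w (Max {k. Poly_Mapping.lookup v k \<noteq> Poly_Mapping.lookup w k})"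
      using M k(1) by simp
    then show ?thesis unfolding revlex_gt_def using eq ne by blast
  next
    case True
    then show ?thesis unfolding revlex_gt_def by (rule disjI1)
  qed
qed

lemma revlex_deg: "revlex_gt v w \<Longrightarrow> mdeg v \<ge> mdeg w"
  unfolding revlex_gt_def by auto

lemma revlex_deg_gt: "mdeg v > mdeg w \<Longrightarrow> revlex_gt v w"
  unfolding revlex_gt_def by auto

lemma revlex_same_deg: "revlex_gt v w \<Longrightarrow> mdeg v = mdeg w \<Longrightarrow>
   (\<exists>k. Poly_Mapping.lookup v k < Poly_Mapping.lookup w k \<and> (\<forall>k'>k. Poly_Mapping.lookup v k' = Poly_Mapping.lookup w k'))"
  unfolding revlex_gt_iff by simp

lemma revlex_same_deg_I: "mdeg v = mdeg w \<Longrightarrow> Poly_Mapping.lookup v k < Poly_Mapping.lookup w k \<Longrightarrow>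
   (\<forall>k'>k. Poly_Mapping.lookup v k' = Poly_Mapping.lookup w k') \<Longrightarrow> revlex_gt v w"
  unfolding revlex_gt_iff by blast

lemma revlex_irrefl: "\<not> revlex_gt v v"
  unfolding revlex_gt_def by simp

lemma revlex_trans: "revlex_gt a b \<Longrightarrow> revlex_gt b c \<Longrightarrow> revlex_gt a c"
proof -
  assume ab: "revlex_gt a b" and bc: "revlex_gt b c"
  show ?thesis
  proof (cases "mdeg a = mdeg b \<and> mdeg b = mdeg c")
    case False
    then have "mdeg a > mdeg c" using revlex_deg[OF ab] revlex_deg[OF bc] by linarith
    then show ?thesis by (rule revlex_deg_gt)
  next
    case True
    then obtain k1 k2 where k1: "Poly_Mapping.lookup a k1 < Poly_Mapping.lookup b k1"
      "\<forall>k'>k1. Poly_Mapping.lookup a k' = Poly_Mapping.lookup b k'"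
      and k2: "Poly_Mapping.lookup b k2 < Poly_Mapping.lookup c k2"
      "\<forall>k'>k2. Poly_Mapping.lookup b k' = Poly_Mapping.lookup c k'"
      using revlex_same_deg[OF ab] revlex_same_deg[OF bc] True by blast
    have L1: "Poly_Mapping.lookup a (max k1 k2) < Poly_Mapping.lookup c (max k1 k2)"
    proof (cases k1 k2 rule: linorder_cases)
      case less
      then have "max k1 k2 = k2" by simp
      then show ?thesis using k1(2) k2(1) less by simp
    next
      case equal
      then show ?thesis using k1(1) k2(1) by simp
    next
      case greater
      then have "max k1 k2 = k1" by simp
      then show ?thesis using k1(1) k2(2) greater by simp
    qed
    have L2: "\<forall>k'>max k1 k2. Poly_Mapping.lookup a k' = Poly_Mapping.lookup c k'"
    proof (intro allI impI)
      fix k' assume "max k1 k2 < k'"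
      then have "k1 < k'" "k2 < k'" by auto
      then show "Poly_Mapping.lookup a k' = Poly_Mapping.lookup c k'" using k1(2) k2(2) by simp
    qed
    have "mdeg a = mdeg c" using True by simp
    then show ?thesis using L1 L2 by (rule revlex_same_deg_I)
  qed
qed

lemma revlex_asym: "revlex_gt a b \<Longrightarrow> \<not> revlex_gt b a"
  using revlex_trans revlex_irrefl by blast

lemma revlex_total: "a \<noteq> b \<Longrightarrow> revlex_gt a b \<or> revlex_gt b a"
proof -
  assume ne: "a \<noteq> b"
  let ?D = "{k. Poly_Mapping.lookup a k \<noteq> Poly_Mapping.lookup b k}"
  have "Max ?D \<in> ?D" using Max_in[OF diffset_finite diffset_ne[OF ne]] .
  moreover have "?D = {k. Poly_Mapping.lookup b k \<noteq> Poly_Mapping.lookup a k}" by auto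
  ultimately show ?thesis using ne unfolding revlex_gt_def by (auto simp: linorder_neq_iff)
qed

lemma revlex_shift:
  assumes ab: "revlex_gt a b \<or> a = b" and c: "c + var j = a + var i" and ij: "i < j"
  shows "revlex_gt c b"
proof -
  have lj: "Poly_Mapping.lookup c j + 1 = Poly_Mapping.lookup a j"
    using arg_cong[OF c, of "\<lambda>p. Poly_Mapping.lookup p j"] ij by (simp add: lookup_add lookup_var)
  have lo: "\<And>x. x \<noteq> i \<Longrightarrow> x \<noteq> j \<Longrightarrow> Poly_Mapping.lookup c x = Poly_Mapping.lookup a x"
    using c by (metis add_right_cancel lookup_add lookup_var)
  have deg: "mdeg c = mdeg a" using arg_cong[OF c, of mdeg] by (simp add: mdeg_add)
  show ?thesis
  proof (cases "a = b")
    case True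
    have "Poly_Mapping.lookup c j < Poly_Mapping.lookup b j" using lj True by simp
    moreover have "\<forall>k'>j. Poly_Mapping.lookup c k' = Poly_Mapping.lookup b k'" using lo ij True by auto
    ultimately show ?thesis using deg True unfolding revlex_gt_iff by auto
  next
    case False
    with ab have ab: "revlex_gt a b" by simp
    show ?thesis
    proof (cases "mdeg a > mdeg b")
      case True then show ?thesis using deg unfolding revlex_gt_iff by auto
    next
      case False
      then obtain k where eq: "mdeg a = mdeg b" and k: "Poly_Mapping.lookup a k < Poly_Mapping.lookup b k"
        "\<forall>k'>k. Poly_Mapping.lookup a k' = Poly_Mapping.lookup b k'" using ab unfolding revlex_gt_iff by auto
      have "Poly_Mapping.lookup c (max k j) < Poly_Mapping.lookup b (max k j)"
      proof (cases k j rule: linorder_cases)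
        case less then show ?thesis using k lj by (auto simp: max_def)
      next
        case equal then show ?thesis using k lj by (auto simp: max_def)
      next
        case greater then show ?thesis using k lo ij by (auto simp: max_def)
      qed
      moreover have "\<forall>k'>max k j. Poly_Mapping.lookup c k' = Poly_Mapping.lookup b k'"
        using k lo ij by auto
      ultimately show ?thesis using deg eq unfolding revlex_gt_iff by auto
    qed
  qed
qed

lemma lookup_sqmon: "finite u \<Longrightarrow> Poly_Mapping.lookup (sqmon u) k = (if k \<in> u then 1 else 0)"
  unfolding sqmon_def by (simp add: lookup_sum lookup_var)

lemma sqmon_inj: "finite u \<Longrightarrow> finite w \<Longrightarrow> sqmon u = sqmon w \<Longrightarrow> u = w"
proof (rule set_eqI)
  fix x assume fu: "finite u" and fw: "finite w" and eq: "sqmon u = sqmon w"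
  have "Poly_Mapping.lookup (sqmon u) x = Poly_Mapping.lookup (sqmon w) x" using eq by simp
  then have "(if x \<in> u then 1 else 0) = (if x \<in> w then (1::nat) else 0)"
    unfolding lookup_sqmon[OF fu, of x] lookup_sqmon[OF fw, of x] .
  then show "x \<in> u \<longleftrightarrow> x \<in> w" by (cases "x \<in> u"; cases "x \<in> w") simp_all
qed

lemma e_gt_irrefl: "\<not> e_gt f u u"
  unfolding e_gt_def using revlex_irrefl by blast

lemma e_gt_trans: "e_gt f a b \<Longrightarrow> e_gt f b c \<Longrightarrow> e_gt f a c"
  unfolding e_gt_def by (auto intro: revlex_trans)

lemma e_gt_asym: "e_gt f a b \<Longrightarrow> \<not> e_gt f b a"
  using e_gt_trans e_gt_irrefl by blast

lemma e_gt_total: "finite u \<Longrightarrow> finite w \<Longrightarrow> u \<noteq> w \<Longrightarrow> e_gt f u w \<or> e_gt f w u"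
proof -
  assume fu: "finite u" and fw: "finite w" and ne: "u \<noteq> w"
  show ?thesis
  proof (cases "fprod f u = fprod f w")
    case True
    then have "sqmon u \<noteq> sqmon w" using sqmon_inj[OF fu fw] ne by blast
    then show ?thesis using revlex_total True unfolding e_gt_def by blast
  next
    case False
    then show ?thesis using revlex_total unfolding e_gt_def by blast
  qed
qed

lemma term_gt_irrefl: "\<not> term_gt f a a"
  unfolding term_gt_def using e_gt_irrefl revlex_irrefl by blast

lemma term_gt_trans: "term_gt f a b \<Longrightarrow> term_gt f b c \<Longrightarrow> term_gt f a c"
  unfolding term_gt_def by (auto intro: e_gt_trans revlex_trans)

lemma term_gt_asym: "term_gt f a b \<Longrightarrow> \<not> term_gt f b a"
  using term_gt_trans term_gt_irrefl by blast

lemma term_gt_total: "finite (fst a) \<Longrightarrow> finite (fst b) \<Longrightarrow> a \<noteq> b \<Longrightarrow> term_gt f a b \<or> term_gt f b a"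
proof -
  assume fa: "finite (fst a)" and fb: "finite (fst b)" and ne: "a \<noteq> b"
  show ?thesis
  proof (cases "fst a = fst b")
    case True
    then have "snd a \<noteq> snd b" using ne prod.expand by blast
    then show ?thesis using revlex_total True unfolding term_gt_def by blast
  next
    case False
    then show ?thesis using e_gt_total[OF fa fb] unfolding term_gt_def by blast
  qed
qed

lemma finite_max_exists:
  assumes "finite A" "A \<noteq> {}" and irr: "\<And>a. \<not> r a a" and tr: "\<And>a b c. r a b \<Longrightarrow> r b c \<Longrightarrow> r a c"
    and tot: "\<And>a b. a \<in> A \<Longrightarrow> b \<in> A \<Longrightarrow> a \<noteq> b \<Longrightarrow> r a b \<or> r b a"
  shows "\<exists>a\<in>A. \<forall>b\<in>A. b \<noteq> a \<longrightarrow> r a b"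
  using assms(1,2) tot
proof (induction A rule: finite_ne_induct)
  case (singleton x) then show ?case by auto
next
  case (insert x F)
  then obtain a where a: "a \<in> F" "\<forall>b\<in>F. b \<noteq> a \<longrightarrow> r a b" by auto
  show ?case
  proof (cases "r a x")
    case True then show ?thesis using a by auto
  next
    case False
    then have "r x a" using insert.prems[of a x] a insert.hyps by auto
    show ?thesis
    proof (rule bexI[of _ x])
      show "\<forall>b\<in>insert x F. b \<noteq> x \<longrightarrow> r x b"
      proof (intro ballI impI)
        fix b assume b: "b \<in> insert x F" "b \<noteq> x"
        then have bF: "b \<in> F" by simp
        show "r x b"
        proof (cases "b = a")
          case True with \<open>r x a\<close> show ?thesis by simp
        next
          case False
          then have "r a b" using a bF by blast
          then show ?thesis using tr \<open>r x a\<close> by blast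
        qed
      qed
    qed simp
  qed
qed

lemma init_term_eq:
  assumes a: "a \<in> kterms g" and m: "\<forall>b\<in>kterms g. b \<noteq> a \<longrightarrow> term_gt f a b"
  shows "init_term f g = a"
  unfolding init_term_def
proof (rule the_equality)
  show "a \<in> kterms g \<and> (\<forall>b\<in>kterms g. b \<noteq> a \<longrightarrow> term_gt f a b)" using a m by blast
  fix x assume x: "x \<in> kterms g \<and> (\<forall>b\<in>kterms g. b \<noteq> x \<longrightarrow> term_gt f x b)"
  show "x = a"
  proof (rule ccontr)
    assume ne: "x \<noteq> a"
    then have "a \<noteq> x" by simp
    then have "term_gt f x a" using x a by blast
    moreover have "term_gt f a x" using m x ne by blast
    ultimately show False using term_gt_asym by blast
  qed
qed

lemma init_term_props:
  assumes "finite (kterms g)" "kterms g \<noteq> {}" "\<forall>a\<in>kterms g. finite (fst a)"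
  shows "init_term f g \<in> kterms g \<and> (\<forall>b\<in>kterms g. b \<noteq> init_term f g \<longrightarrow> term_gt f (init_term f g) b)"
proof -
  have "\<exists>a\<in>kterms g. \<forall>b\<in>kterms g. b \<noteq> a \<longrightarrow> term_gt f a b"
  proof (rule finite_max_exists[OF assms(1,2)])
    show "\<not> term_gt f a a" for a by (rule term_gt_irrefl)
    show "term_gt f a c" if "term_gt f a b" "term_gt f b c" for a b c using that by (rule term_gt_trans)
    show "term_gt f a b \<or> term_gt f b a" if "a \<in> kterms g" "b \<in> kterms g" "a \<noteq> b" for a b
      using term_gt_total assms(3) that by blast
  qed
  then obtain a where a: "a \<in> kterms g" "\<forall>b\<in>kterms g. b \<noteq> a \<longrightarrow> term_gt f a b"
    by blast
  have "init_term f g = a" using a by (rule init_term_eq)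
  then show ?thesis using a by simp
qed



lemma neg1_pow_mpoly: "((-1) ^ k :: 'b::comm_ring_1 mpoly) = Poly_Mapping.single 0 ((-1) ^ k)"
  by (induction k) (simp_all add: mult_single single_uminus)

lemma lookup_neg1_mult: "Poly_Mapping.lookup (((-1) ^ k :: 'b::comm_ring_1 mpoly) * p) r = (-1) ^ k * Poly_Mapping.lookup p r"
  unfolding neg1_pow_mpoly by (simp add: lookup_single_mult mdvd_def)

lemma neg1_single: "((-1) ^ k :: 'b::comm_ring_1 mpoly) * Poly_Mapping.single a x = Poly_Mapping.single a ((-1)^k * x)"
  unfolding neg1_pow_mpoly by (simp add: mult_single)

lemma fprod_insert: "finite s \<Longrightarrow> i \<notin> s \<Longrightarrow> fprod f (insert i s) = f i + fprod f s"
  unfolding fprod_def by simp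

lemma fprod_empty[simp]: "fprod f {} = 0"
  unfolding fprod_def by simp

lemma mdvd_plus_iff: "mdvd (a + b) (b + r) \<longleftrightarrow> mdvd a (r::mon)"
proof
  assume "mdvd (a + b) (b + r)"
  then obtain q where q: "b + r = a + b + q" unfolding mdvd_def by blast
  then have "b + r = b + (a + q)" by (simp add: ac_simps)
  then have "r = a + q" by (rule add_left_imp_eq)
  then show "mdvd a r" unfolding mdvd_def by blast
next
  assume "mdvd a r"
  then obtain q where q: "r = a + q" unfolding mdvd_def by blast
  then have "b + r = a + b + q" by (simp add: ac_simps)
  then show "mdvd (a + b) (b + r)" unfolding mdvd_def by blast
qed

lemma diff_plus_cancel: "(b + r) - (a + b) = r - (a::mon)"
proof -
  have "(b + r) - (a + b) = (b + r) - (b + a)" by (simp add: add.commute)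
  also have "\<dots> = (b + r) - b - a" by (rule diff_diff_add[symmetric])
  also have "\<dots> = r - a" by simp
  finally show ?thesis .
qed

subsection \<open>Initial module characterization\<close>

lemma init_module_char:
  assumes "h \<in> init_module n f J N" "Poly_Mapping.lookup (h w) v \<noteq> 0"
  shows "\<exists>g\<in>N. g \<noteq> (\<lambda>_. 0) \<and> fst (init_term f g) = w \<and> mdvd (snd (init_term f g)) v"
  using assms unfolding init_module_def
proof (induction arbitrary: w v rule: submod_gen.induct)
  case sg_zero
  then show ?case by simp
next
  case (sg_gen h)
  then obtain g where g: "h = term_elem J (init_term f g)" "g \<in> N" "g \<noteq> (\<lambda>_. 0)" by blast
  have w: "w = fst (init_term f g)" and nz: "Poly_Mapping.lookup (nf J (monom (snd (init_term f g)))) v \<noteq> 0"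
    using sg_gen.prems unfolding g(1) term_elem_def by (auto split: if_splits)
  have "v = snd (init_term f g)" using nz by (auto simp: lookup_nf monom_def lookup_single when_def split: if_splits)
  then show ?case using g w by auto
next
  case (sg_add g h)
  have "Poly_Mapping.lookup (g w) v \<noteq> 0 \<or> Poly_Mapping.lookup (h w) v \<noteq> 0"
    using sg_add.prems by (auto simp: lookup_add)
  then show ?case using sg_add.IH by blast
next
  case (sg_mult s g)
  have "Poly_Mapping.lookup (s * g w) v \<noteq> 0" using sg_mult.prems by (auto simp: ksmult_def lookup_nf split: if_splits)
  then have "v \<in> Poly_Mapping.keys (s * g w)" by (simp add: in_keys_iff)
  then obtain a b where ab: "v = a + b" "b \<in> Poly_Mapping.keys (g w)" using keys_mult by blast
  then obtain g' where g': "g' \<in> N" "g' \<noteq> (\<lambda>_. 0)" "fst (init_term f g') = w" "mdvd (snd (init_term f g')) b"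
    using sg_mult.IH[of w b] by (auto simp: in_keys_iff)
  have "mdvd (snd (init_term f g')) v" using g'(4) ab(1) mdvd_mono[of _ b a] by (simp add: add.commute)
  then show ?case using g' by blast
qed

lemma term_elem_in_init:
  assumes "g \<in> N" "g \<noteq> (\<lambda>_. 0)"
  shows "term_elem J (init_term f g) \<in> init_module n f J N"
  unfolding init_module_def using assms by (auto intro: submod_gen.sg_gen)

subsection \<open>Coefficient cycles\<close>

definition ccyc :: "nat \<Rightarrow> (nat \<Rightarrow> mon) \<Rightarrow> 'b::comm_ring_1 mpoly set \<Rightarrow> nat \<Rightarrow> mon \<Rightarrow> (nat set \<Rightarrow> 'b) \<Rightarrow> bool" where
  "ccyc m f J t d c \<longleftrightarrow>
     (\<forall>w. c w \<noteq> 0 \<longrightarrow> w \<subseteq> {1..m} \<and> card w = t \<and> mdvd (fprod f w) d \<and> monom (d - fprod f w) \<notin> J) \<and>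
     (\<forall>s. finite s \<longrightarrow> mdvd (fprod f s) d \<longrightarrow> monom (d - fprod f s) \<notin> J \<longrightarrow>
        (\<Sum>i\<in>{1..m} - s. (-1) ^ card {j\<in>s. j < i} * c (insert i s)) = 0)"

lemma kterms_finite:
  assumes "g \<in> koszul n m J t"
  shows "finite (kterms g)" "\<forall>a\<in>kterms g. fst a \<subseteq> {1..m} \<and> card (fst a) = t"
proof -
  have sub: "kterms g \<subseteq> (\<Union>u\<in>Pow {1..m}. {u} \<times> Poly_Mapping.keys (g u))"
  proof
    fix a assume "a \<in> kterms g"
    then obtain u v where a: "a = (u, v)" "Poly_Mapping.lookup (g u) v \<noteq> 0" unfolding kterms_def by blast
    then have "g u \<noteq> 0" by auto
    then have "u \<subseteq> {1..m}" using assms unfolding koszul_def by blast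
    then show "a \<in> (\<Union>u\<in>Pow {1..m}. {u} \<times> Poly_Mapping.keys (g u))" using a by (auto simp: in_keys_iff)
  qed
  show "finite (kterms g)" by (rule finite_subset[OF sub]) auto
  show "\<forall>a\<in>kterms g. fst a \<subseteq> {1..m} \<and> card (fst a) = t"
  proof
    fix a assume "a \<in> kterms g"
    then obtain u v where a: "a = (u, v)" "Poly_Mapping.lookup (g u) v \<noteq> 0" unfolding kterms_def by blast
    then have "g u \<noteq> 0" by auto
    then show "fst a \<subseteq> {1..m} \<and> card (fst a) = t" using assms a unfolding koszul_def by auto
  qed
qed

lemma cycle_eq_lookup:
  fixes g :: "'b::comm_ring_1 kelem"
  assumes g: "g \<in> cycles n m f J t" and s: "finite s" and dv: "mdvd (fprod f s) d"
    and nJ: "monom (d - fprod f s) \<notin> J"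
  shows "(\<Sum>i\<in>{1..m} - s. (-1) ^ card {j\<in>s. j < i} *
     (if mdvd (fprod f (insert i s)) d then Poly_Mapping.lookup (g (insert i s)) (d - fprod f (insert i s)) else 0)) = 0"
proof -
  have "kdiff m f J g s = 0" using g unfolding cycles_def by (auto dest: fun_cong[of _ _ s])
  then have "Poly_Mapping.lookup (kdiff m f J g s) (d - fprod f s) = 0" by simp
  then have "Poly_Mapping.lookup (\<Sum>i\<in>{1..m} - s. (-1) ^ card {j\<in>s. j < i} * monom (f i) * g (insert i s)) (d - fprod f s) = 0"
    unfolding kdiff_def lookup_nf using nJ by simp
  then have "(\<Sum>i\<in>{1..m} - s. (-1) ^ card {j\<in>s. j < i} * Poly_Mapping.lookup (monom (f i) * g (insert i s)) (d - fprod f s)) = 0"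
    by (simp add: lookup_sum mult.assoc lookup_neg1_mult)
  moreover have "Poly_Mapping.lookup (monom (f i) * g (insert i s)) (d - fprod f s) =
     (if mdvd (fprod f (insert i s)) d then Poly_Mapping.lookup (g (insert i s)) (d - fprod f (insert i s)) else 0)"
    if i: "i \<in> {1..m} - s" for i
  proof -
    obtain r where r: "d = fprod f s + r" using dv unfolding mdvd_def by blast
    have fi: "fprod f (insert i s) = f i + fprod f s" using i s by (simp add: fprod_insert)
    have ds: "d - fprod f s = r" using r by simp
    have "mdvd (fprod f (insert i s)) d \<longleftrightarrow> mdvd (f i) r"
      unfolding fi r by (rule mdvd_plus_iff)
    moreover have "d - fprod f (insert i s) = r - f i" unfolding fi r
      by (rule diff_plus_cancel)
    ultimately show ?thesis by (simp add: lookup_monom_mult ds)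
  qed
  ultimately show ?thesis by simp
qed



lemma sum_single: "(\<Sum>x\<in>A. Poly_Mapping.single k (h x)) = Poly_Mapping.single k (sum h A)"
  by (induction A rule: infinite_finite_induct) (simp_all add: single_add)

lemma lookup_single_nz: "Poly_Mapping.lookup (Poly_Mapping.single k x) v \<noteq> 0 \<Longrightarrow> v = k \<and> x \<noteq> 0"
  by (simp add: lookup_single when_def split: if_splits)

lemma extract_cyc:
  fixes g :: "'b::comm_ring_1 kelem"
  assumes g: "g \<in> cycles n m f J t" "g \<noteq> (\<lambda>_. 0)" and it: "init_term f g = (u, v)"
  defines "d \<equiv> fprod f u + v"
  defines "cg \<equiv> (\<lambda>w. if mdvd (fprod f w) d then Poly_Mapping.lookup (g w) (d - fprod f w) else 0)"
  shows "u \<subseteq> {1..m} \<and> card u = t \<and> is_mon n v \<and> monom v \<notin> J \<and>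
    ccyc m f J t d cg \<and> cg u \<noteq> 0 \<and> (\<forall>w. e_gt f w u \<longrightarrow> cg w = 0)"
proof -
  have K: "g \<in> koszul n m J t" using g(1) unfolding cycles_def by blast
  note KT = kterms_finite[OF K]
  have ne: "kterms g \<noteq> {}"
  proof -
    obtain w where "g w \<noteq> 0" using g(2) by blast
    have "\<exists>x. Poly_Mapping.lookup (g w) x \<noteq> 0"
    proof (rule ccontr)
      assume "\<not> (\<exists>x. Poly_Mapping.lookup (g w) x \<noteq> 0)"
      then have "g w = 0" by (intro poly_mapping_eqI) simp
      then show False using \<open>g w \<noteq> 0\<close> by simp
    qed
    then obtain x where "Poly_Mapping.lookup (g w) x \<noteq> 0" by blast
    then have "(w, x) \<in> kterms g" unfolding kterms_def by simp
    then show ?thesis by blast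
  qed
  have fin: "\<forall>a\<in>kterms g. finite (fst a)"
  proof
    fix a assume "a \<in> kterms g"
    then have "fst a \<subseteq> {1..m}" using KT(2) by blast
    then show "finite (fst a)" using finite_subset[of "fst a" "{1..m}"] by simp
  qed
  have P: "(u, v) \<in> kterms g" "\<forall>b\<in>kterms g. b \<noteq> (u, v) \<longrightarrow> term_gt f (u, v) b"
    using init_term_props[OF KT(1) ne fin, of f] unfolding it by auto
  have uv: "Poly_Mapping.lookup (g u) v \<noteq> 0" using P(1) unfolding kterms_def by simp
  have u: "u \<subseteq> {1..m} \<and> card u = t" using bspec[OF KT(2) P(1)] by simp
  have kw: "\<And>w x. Poly_Mapping.lookup (g w) x \<noteq> 0 \<Longrightarrow> is_mon n x \<and> monom x \<notin> J"
  proof -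
    fix w x assume "Poly_Mapping.lookup (g w) x \<noteq> 0"
    then have x: "x \<in> Poly_Mapping.keys (g w)" by (simp add: in_keys_iff)
    have "g w \<in> polyS n" "nf J (g w) = g w" using K unfolding koszul_def by auto
    then show "is_mon n x \<and> monom x \<notin> J" using x in_keys_nf[of x J "g w"] unfolding polyS_def by auto
  qed
  have dv: "d - fprod f u = v" unfolding d_def by simp
  have cgu: "cg u \<noteq> 0" unfolding cg_def using uv dv d_def by (simp add: mdvd_add_right)
  have cgw: "w \<subseteq> {1..m} \<and> card w = t \<and> mdvd (fprod f w) d \<and> monom (d - fprod f w) \<notin> J \<and>
      (w, d - fprod f w) \<in> kterms g" if "cg w \<noteq> 0" for w
  proof -
    have md: "mdvd (fprod f w) d" and l: "Poly_Mapping.lookup (g w) (d - fprod f w) \<noteq> 0"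
      using that unfolding cg_def by (auto split: if_splits)
    have "(w, d - fprod f w) \<in> kterms g" using l unfolding kterms_def by simp
    then show ?thesis using bspec[OF KT(2)] md kw[OF l] by fastforce
  qed
  have lead: "\<forall>w. e_gt f w u \<longrightarrow> cg w = 0"
  proof (intro allI impI)
    fix w assume e: "e_gt f w u"
    show "cg w = 0"
    proof (rule ccontr)
      assume "cg w \<noteq> 0"
      then have wk: "(w, d - fprod f w) \<in> kterms g" using cgw by blast
      have "w \<noteq> u" using e e_gt_irrefl by blast
      then have "term_gt f (u, v) (w, d - fprod f w)" using P(2) wk by auto
      then have "e_gt f u w" unfolding term_gt_def using \<open>w \<noteq> u\<close> by simp
      then show False using e e_gt_asym by blast
    qed
  qed
  have cc: "ccyc m f J t d cg"
    unfolding ccyc_def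
  proof (intro conjI allI impI)
    fix w assume "cg w \<noteq> 0"
    then show "w \<subseteq> {1..m}" "card w = t" "mdvd (fprod f w) d" "monom (d - fprod f w) \<notin> J"
      using cgw by blast+
  next
    fix s assume "finite s" "mdvd (fprod f s) d" "monom (d - fprod f s) \<notin> J"
    then show "(\<Sum>i\<in>{1..m} - s. (-1) ^ card {j\<in>s. j < i} * cg (insert i s)) = 0"
      unfolding cg_def using cycle_eq_lookup[OF g(1)] by blast
  qed
  show ?thesis using u kw[OF uv] cc cgu lead by blast
qed

lemma ccyc_nz:
  assumes "ccyc m f J t d c" "c w \<noteq> 0"
  shows "w \<subseteq> {1..m} \<and> card w = t \<and> mdvd (fprod f w) d \<and> monom (d - fprod f w) \<notin> J"
proof -
  have "\<forall>w. c w \<noteq> 0 \<longrightarrow> w \<subseteq> {1..m} \<and> card w = t \<and> mdvd (fprod f w) d \<and> monom (d - fprod f w) \<notin> J"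
    using assms(1) unfolding ccyc_def by (rule conjunct1)
  then show ?thesis using assms(2) by blast
qed

lemma ccyc_sum:
  assumes "ccyc m f J t d c" "finite s" "mdvd (fprod f s) d" "monom (d - fprod f s) \<notin> J"
  shows "(\<Sum>i\<in>{1..m} - s. (-1) ^ card {j\<in>s. j < i} * c (insert i s)) = 0"
proof -
  have "\<forall>s. finite s \<longrightarrow> mdvd (fprod f s) d \<longrightarrow> monom (d - fprod f s) \<notin> J \<longrightarrow>
        (\<Sum>i\<in>{1..m} - s. (-1) ^ card {j\<in>s. j < i} * c (insert i s)) = 0"
    using assms(1) unfolding ccyc_def by (rule conjunct2)
  then show ?thesis using assms(2-4) by blast
qed

lemma summand_eq:
  fixes c :: "nat set \<Rightarrow> 'b::comm_ring_1"
  assumes cc: "ccyc m f J t d c" and i: "i \<notin> s"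
  shows "(-1) ^ k * monom (f i) * Poly_Mapping.single (d - fprod f (insert i s)) (c (insert i s)) =
     Poly_Mapping.single (d - fprod f s) ((-1) ^ k * c (insert i s))"
proof (cases "c (insert i s) = 0")
  case True then show ?thesis by simp
next
  case False
  then have sub: "insert i s \<subseteq> {1..m}" and md: "mdvd (fprod f (insert i s)) d"
    using ccyc_nz[OF cc] by blast+
  have "finite (insert i s)" using sub by (rule finite_subset) simp
  then have fs: "finite s" by simp
  have fi: "fprod f (insert i s) = f i + fprod f s" using fs i by (rule fprod_insert)
  obtain r where r: "d = f i + fprod f s + r" using md fi unfolding mdvd_def by auto
  have e1: "d - fprod f (insert i s) = r" unfolding fi r by simp
  have "d = fprod f s + (f i + r)" unfolding r by (simp add: add.assoc add.left_commute)
  then have e2: "d - fprod f s = f i + r" by simp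
  have "monom (f i) * Poly_Mapping.single (d - fprod f (insert i s)) (c (insert i s)) =
     Poly_Mapping.single (d - fprod f s) (c (insert i s))"
    unfolding monom_def e1 e2 by (simp add: mult_single)
  then show ?thesis by (simp add: mult.assoc neg1_single)
qed

lemma realize:
  fixes c :: "nat set \<Rightarrow> 'b::comm_ring_1"
  assumes cc: "ccyc m f J t d c" and cu: "c u \<noteq> 0" and lead: "\<forall>w. e_gt f w u \<longrightarrow> c w = 0"
    and d: "is_mon n d"
  defines "g \<equiv> (\<lambda>w. Poly_Mapping.single (d - fprod f w) (c w))"
  shows "g \<in> cycles n m f J t \<and> g \<noteq> (\<lambda>_. 0) \<and> init_term f g = (u, d - fprod f u)"
proof -
  have cnz: "w \<subseteq> {1..m} \<and> card w = t \<and> mdvd (fprod f w) d \<and> monom (d - fprod f w) \<notin> J" if "c w \<noteq> 0" for w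
    using ccyc_nz[OF cc that] .
  have K: "g \<in> koszul n m J t"
    unfolding koszul_def
  proof (intro CollectI conjI allI impI)
    fix w assume "\<not> (w \<subseteq> {1..m} \<and> card w = t)"
    then have "c w = 0" using cnz by blast
    then show "g w = 0" unfolding g_def by simp
  next
    fix w show "g w \<in> polyS n" unfolding g_def polyS_def using is_mon_minus[OF d] by simp
  next
    fix w show "nf J (g w) = g w"
    proof (cases "c w = 0")
      case True then show ?thesis unfolding g_def by simp
    next
      case False then show ?thesis unfolding g_def nf_single using cnz by simp
    qed
  qed
  have D: "kdiff m f J g = (\<lambda>_. 0)"
  proof
    fix s
    have S: "(\<Sum>i\<in>{1..m} - s. (-1) ^ card {j\<in>s. j < i} * monom (f i) * g (insert i s)) =
       Poly_Mapping.single (d - fprod f s) (\<Sum>i\<in>{1..m} - s. (-1) ^ card {j\<in>s. j < i} * c (insert i s))"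
      unfolding g_def sum_single[symmetric] by (rule sum.cong) (auto intro: summand_eq[OF cc])
    show "kdiff m f J g s = 0"
    proof (cases "\<exists>i\<in>{1..m} - s. c (insert i s) \<noteq> 0")
      case False
      then have "(\<Sum>i\<in>{1..m} - s. (-1) ^ card {j\<in>s. j < i} * c (insert i s)) = 0"
        by (intro sum.neutral) auto
      then show ?thesis unfolding kdiff_def S by simp
    next
      case True
      then obtain i where i: "i \<in> {1..m} - s" "c (insert i s) \<noteq> 0" by blast
      then have sub: "insert i s \<subseteq> {1..m}" and md: "mdvd (fprod f (insert i s)) d" using cnz by blast+
      have "finite (insert i s)" using sub by (rule finite_subset) simp
      then have fs: "finite s" by simp
      have "fprod f (insert i s) = f i + fprod f s" using fs i(1) by (simp add: fprod_insert)
      then have "mdvd (fprod f s) (fprod f (insert i s))" by (simp add: mdvd_add_left)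
      then have "mdvd (fprod f s) d" using md by (rule mdvd_trans)
      then show ?thesis
      proof (cases "monom (d - fprod f s) \<in> J")
        case True then show ?thesis unfolding kdiff_def S nf_single by simp
      next
        case False
        have "(\<Sum>i\<in>{1..m} - s. (-1) ^ card {j\<in>s. j < i} * c (insert i s)) = 0"
          using ccyc_sum[OF cc fs \<open>mdvd (fprod f s) d\<close> False] .
        then show ?thesis unfolding kdiff_def S by simp
      qed
    qed
  qed
  have gu: "Poly_Mapping.lookup (g u) (d - fprod f u) \<noteq> 0" unfolding g_def using cu by simp
  have a: "(u, d - fprod f u) \<in> kterms g" using gu unfolding kterms_def by simp
  have m: "\<forall>b\<in>kterms g. b \<noteq> (u, d - fprod f u) \<longrightarrow> term_gt f (u, d - fprod f u) b"
  proof (intro ballI impI)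
    fix b assume b: "b \<in> kterms g" "b \<noteq> (u, d - fprod f u)"
    obtain w v' where bw: "b = (w, v')" by force
    have "Poly_Mapping.lookup (g w) v' \<noteq> 0" using b(1) bw unfolding kterms_def by simp
    then have "v' = d - fprod f w \<and> c w \<noteq> 0" unfolding g_def by (rule lookup_single_nz)
    then have v': "v' = d - fprod f w" and cw: "c w \<noteq> 0" by simp_all
    have wu: "w \<noteq> u" using b(2) bw v' by simp
    have fw: "finite w" using cnz[OF cw] finite_subset[of w "{1..m}"] by simp
    have fu: "finite u" using cnz[OF cu] finite_subset[of u "{1..m}"] by simp
    have "e_gt f u w" using e_gt_total[OF fw fu wu, of f] lead cw by blast
    then show "term_gt f (u, d - fprod f u) b" unfolding term_gt_def bw by simp
  qed
  have "init_term f g = (u, d - fprod f u)" using a m by (rule init_term_eq)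
  moreover have "g \<noteq> (\<lambda>_. 0)" using gu by (metis lookup_zero)
  ultimately show ?thesis using K D unfolding cycles_def by blast
qed



definition sg :: "nat \<Rightarrow> nat set \<Rightarrow> 'b::comm_ring_1" where
  "sg i s = (-1) ^ card {j\<in>s. j < i}"

definition pm :: "bool \<Rightarrow> 'b::comm_ring_1" where
  "pm P = (if P then -1 else 1)"

lemma sg_insert:
  assumes "finite r" "y \<notin> r"
  shows "sg x (insert y r) = pm (y < x) * (sg x r :: 'b::comm_ring_1)"
proof (cases "y < x")
  case True
  then have "{j\<in>insert y r. j < x} = insert y {j\<in>r. j < x}" by auto
  moreover have "card (insert y {j\<in>r. j < x}) = Suc (card {j\<in>r. j < x})" using assms by simp
  ultimately show ?thesis using True by (simp add: sg_def pm_def)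
next
  case False
  then have "{j\<in>insert y r. j < x} = {j\<in>r. j < x}" by auto
  then show ?thesis using False by (simp add: sg_def pm_def)
qed

lemma sg_sq: "sg x s * sg x s = (1::'b::comm_ring_1)"
  unfolding sg_def by (simp add: power_mult_distrib[symmetric])

lemma pm_sq: "pm P * pm P = (1::'b::comm_ring_1)"
  unfolding pm_def by simp

lemma pm_ident:
  assumes "i \<noteq> l" "i \<noteq> (k::nat)"
  shows "pm (l < i) * pm (i < k) * pm (i < l) = (pm (k < i) :: 'b::comm_ring_1)"
proof -
  have "l < i \<longleftrightarrow> \<not> i < l" using assms by auto
  moreover have "k < i \<longleftrightarrow> \<not> i < k" using assms by auto
  ultimately show ?thesis unfolding pm_def by (cases "i < l"; cases "i < k") simp_all
qed

definition bd :: "nat set \<Rightarrow> (nat set \<Rightarrow> 'b::comm_ring_1) \<Rightarrow> nat set \<Rightarrow> 'b" where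
  "bd M c s = (\<Sum>i\<in>M - s. sg i s * c (insert i s))"

definition Dop :: "nat set \<Rightarrow> (nat \<Rightarrow> nat \<Rightarrow> bool) \<Rightarrow> (nat set \<Rightarrow> 'b::comm_ring_1) \<Rightarrow> (nat \<Rightarrow> 'b)
    \<Rightarrow> (nat set \<Rightarrow> 'b) \<Rightarrow> nat set \<Rightarrow> 'b" where
  "Dop M R \<alpha> \<beta> c w = \<alpha> w * c w +
     (\<Sum>l\<in>w. \<Sum>k\<in>{k\<in>M - w. R k l}. sg k (w - {l}) * sg l (w - {l}) * \<beta> k * c (insert k (w - {l})))"

lemma triple_sign:
  assumes fs: "finite s" and l: "l \<in> s" and i: "i \<notin> s" and k: "k \<notin> s" and ik: "i \<noteq> k"
  shows "(sg i s :: 'b::comm_ring_1) * (sg k (insert i s - {l}) * sg l (insert i s - {l}) * \<beta> k * c (insert k (insert i s - {l}))) =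
    sg k (s - {l}) * sg l (s - {l}) * \<beta> k * (sg i (insert k (s - {l})) * c (insert i (insert k (s - {l}))))"
proof -
  let ?r = "s - {l}"
  have fr: "finite ?r" using fs by simp
  have il: "i \<noteq> l" using i l by auto
  have s_eq: "s = insert l ?r" using l by auto
  have e1: "insert i s - {l} = insert i ?r" using il by auto
  have e2: "insert k (insert i ?r) = insert i (insert k ?r)" by (rule insert_commute)
  have s1: "sg i s = pm (l < i) * (sg i ?r :: 'b)"
    by (subst s_eq, rule sg_insert[OF fr]) simp
  have s2: "sg k (insert i ?r) = pm (i < k) * (sg k ?r :: 'b)" by (rule sg_insert[OF fr]) (use i in simp)
  have s3: "sg l (insert i ?r) = pm (i < l) * (sg l ?r :: 'b)" by (rule sg_insert[OF fr]) (use i in simp)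
  have s4: "sg i (insert k ?r) = pm (k < i) * (sg i ?r :: 'b)" by (rule sg_insert[OF fr]) (use k in simp)
  have P: "pm (l < i) * pm (i < k) * pm (i < l) = (pm (k < i) :: 'b)" using il ik by (rule pm_ident)
  have "(sg i s :: 'b) * (sg k (insert i s - {l}) * sg l (insert i s - {l}) * \<beta> k * c (insert k (insert i s - {l})))
     = (pm (l < i) * pm (i < k) * pm (i < l)) * (sg i ?r * sg k ?r * sg l ?r * \<beta> k * c (insert i (insert k ?r)))"
    unfolding e1 e2 s1 s2 s3 by (simp add: ac_simps)
  also have "\<dots> = pm (k < i) * (sg i ?r * sg k ?r * sg l ?r * \<beta> k * c (insert i (insert k ?r)))"
    unfolding P ..
  also have "\<dots> = sg k ?r * sg l ?r * \<beta> k * (sg i (insert k ?r) * c (insert i (insert k ?r)))"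
    unfolding s4 by (simp add: ac_simps)
  finally show ?thesis .
qed

lemma single_sign:
  assumes fs: "finite s" and l: "l \<in> s" and k: "k \<notin> s"
  shows "sg k (s - {l}) * sg l (s - {l}) * (sg l (insert k (s - {l})) :: 'b::comm_ring_1) = - sg k s"
proof -
  let ?r = "s - {l}"
  have fr: "finite ?r" using fs by simp
  have kl: "k \<noteq> l" using k l by auto
  have s_eq: "s = insert l ?r" using l by auto
  have s1: "sg k s = pm (l < k) * (sg k ?r :: 'b)"
    by (subst s_eq, rule sg_insert[OF fr]) simp
  have s2: "sg l (insert k ?r) = pm (k < l) * (sg l ?r :: 'b)" by (rule sg_insert[OF fr]) (use k in simp)
  have P: "pm (k < l) = - (pm (l < k) :: 'b)" using kl unfolding pm_def by (cases "k < l") auto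
  have "sg k ?r * sg l ?r * (sg l (insert k ?r) :: 'b) = pm (k < l) * sg k ?r * (sg l ?r * sg l ?r)"
    unfolding s2 by (simp add: ac_simps)
  also have "\<dots> = - sg k s" unfolding sg_sq P s1 by simp
  finally show ?thesis .
qed



lemma sum_if_const: "finite A \<Longrightarrow> (\<Sum>x\<in>A. if P x then z else 0) = of_nat (card {x\<in>A. P x}) * (z::'b::comm_ring_1)"
  by (simp add: sum.inter_filter[symmetric])

lemma Dop_comm:
  fixes c \<alpha> :: "nat set \<Rightarrow> 'b::comm_ring_1" and \<beta> :: "nat \<Rightarrow> 'b"
  assumes M: "finite M" and s: "s \<subseteq> M"
    and H1: "\<forall>i\<in>M - s. c (insert i s) \<noteq> 0 \<longrightarrow> \<alpha> (insert i s) = \<alpha> s - \<beta> i"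
    and H2: "\<forall>k\<in>M - s. \<beta> k \<noteq> 0 \<longrightarrow> card {l\<in>M. R k l} = 1"
    and H3: "\<forall>k. \<not> R k k"
  shows "bd M (Dop M R \<alpha> \<beta> c) s = Dop M R \<alpha> \<beta> (bd M c) s"
proof -
  define A where "A = M - s"
  have fs: "finite s" using M s finite_subset by auto
  have fA: "finite A" using M unfolding A_def by simp
  define Z where "Z k = sg k s * \<beta> k * c (insert k s)" for k
  define T where "T i l k = sg k (insert i s - {l}) * sg l (insert i s - {l}) * \<beta> k * c (insert k (insert i s - {l}))" for i l k
  define T' where "T' i l k = sg k (s - {l}) * sg l (s - {l}) * \<beta> k * (sg i (insert k (s - {l})) * c (insert i (insert k (s - {l}))))" for i l k
  define F where "F i l k = (if k \<noteq> i \<and> R k l then sg i s * T i l k else 0)" for i l k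
  define N1 where "N1 k = card {i\<in>A. i \<noteq> k \<and> R k i}" for k
  define N2 where "N2 k = card {l\<in>s. R k l}" for k

  have L1: "bd M (Dop M R \<alpha> \<beta> c) s = (\<Sum>i\<in>A. sg i s * (\<alpha> (insert i s) * c (insert i s))) +
     (\<Sum>i\<in>A. sg i s * (\<Sum>l\<in>insert i s. \<Sum>k\<in>{k\<in>M - insert i s. R k l}. T i l k))"
    unfolding bd_def Dop_def A_def T_def by (simp add: distrib_left sum.distrib)
  have L2: "(\<Sum>i\<in>A. sg i s * (\<alpha> (insert i s) * c (insert i s))) = \<alpha> s * bd M c s - (\<Sum>k\<in>A. Z k)"
  proof -
    have "sg i s * (\<alpha> (insert i s) * c (insert i s)) = \<alpha> s * (sg i s * c (insert i s)) - Z i" if i: "i \<in> A" for i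
    proof (cases "c (insert i s) = 0")
      case True then show ?thesis by (simp add: Z_def)
    next
      case False
      then have "\<alpha> (insert i s) = \<alpha> s - \<beta> i" using H1 i unfolding A_def by blast
      then show ?thesis unfolding Z_def by (simp only:) (simp add: algebra_simps)
    qed
    then have "(\<Sum>i\<in>A. sg i s * (\<alpha> (insert i s) * c (insert i s))) = (\<Sum>i\<in>A. \<alpha> s * (sg i s * c (insert i s)) - Z i)"
      by (rule sum.cong[OF refl])
    also have "\<dots> = \<alpha> s * bd M c s - (\<Sum>k\<in>A. Z k)"
      by (simp add: sum_subtractf sum_distrib_left bd_def A_def)
    finally show ?thesis .
  qed
  have L3: "sg i s * (\<Sum>l\<in>insert i s. \<Sum>k\<in>{k\<in>M - insert i s. R k l}. T i l k) =
      (\<Sum>k\<in>A. if k \<noteq> i \<and> R k i then Z k else 0) + (\<Sum>l\<in>s. \<Sum>k\<in>A. F i l k)" if i: "i \<in> A" for i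
  proof -
    have iS: "i \<notin> s" using i unfolding A_def by simp
    have filt: "{k\<in>M - insert i s. R k l} = {k\<in>A. k \<noteq> i \<and> R k l}" for l unfolding A_def by auto
    have "(\<Sum>l\<in>insert i s. \<Sum>k\<in>{k\<in>M - insert i s. R k l}. T i l k) =
      (\<Sum>k\<in>A. if k \<noteq> i \<and> R k i then T i i k else 0) + (\<Sum>l\<in>s. \<Sum>k\<in>A. if k \<noteq> i \<and> R k l then T i l k else 0)"
      unfolding filt sum.insert[OF fs iS] by (simp add: sum.inter_filter[OF fA])
    moreover have "sg i s * T i i k = Z k" for k
    proof -
      have "insert i s - {i} = s" using iS by auto
      then have "sg i s * T i i k = (sg i s * sg i s) * (sg k s * \<beta> k * c (insert k s))"
        unfolding T_def by (simp add: ac_simps)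
      then show ?thesis unfolding sg_sq Z_def by simp
    qed
    ultimately show ?thesis unfolding F_def
      by (simp add: distrib_left sum_distrib_left if_distrib cong: if_cong)
  qed
  have L4: "(\<Sum>i\<in>A. \<Sum>k\<in>A. if k \<noteq> i \<and> R k i then Z k else 0) = (\<Sum>k\<in>A. of_nat (N1 k) * Z k)"
  proof -
    have "(\<Sum>i\<in>A. \<Sum>k\<in>A. if k \<noteq> i \<and> R k i then Z k else 0) = (\<Sum>k\<in>A. \<Sum>i\<in>A. if i \<noteq> k \<and> R k i then Z k else 0)"
      by (subst sum.swap) (simp add: conj_commute eq_commute)
    also have "\<dots> = (\<Sum>k\<in>A. of_nat (N1 k) * Z k)"
      unfolding N1_def by (simp add: sum_if_const[OF fA])
    finally show ?thesis .
  qed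
  have LHS: "bd M (Dop M R \<alpha> \<beta> c) s = \<alpha> s * bd M c s - (\<Sum>k\<in>A. Z k) + (\<Sum>k\<in>A. of_nat (N1 k) * Z k)
      + (\<Sum>i\<in>A. \<Sum>l\<in>s. \<Sum>k\<in>A. F i l k)"
  proof -
    have "(\<Sum>i\<in>A. sg i s * (\<Sum>l\<in>insert i s. \<Sum>k\<in>{k\<in>M - insert i s. R k l}. T i l k)) =
       (\<Sum>i\<in>A. (\<Sum>k\<in>A. if k \<noteq> i \<and> R k i then Z k else 0) + (\<Sum>l\<in>s. \<Sum>k\<in>A. F i l k))"
      using L3 by (rule sum.cong[OF refl])
    then show ?thesis unfolding L1 L2 by (simp add: sum.distrib L4)
  qed

  have R5: "sg k (s - {l}) * sg l (s - {l}) * \<beta> k * bd M c (insert k (s - {l})) =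
      - Z k + (\<Sum>i\<in>A. if i \<noteq> k then T' i l k else 0)" if l: "l \<in> s" and k: "k \<in> A" for l k
  proof -
    have kS: "k \<notin> s" using k unfolding A_def by simp
    have Meq: "M - insert k (s - {l}) = insert l (A - {k})" using l k s unfolding A_def by auto
    have lA: "l \<notin> A - {k}" using l unfolding A_def by simp
    have ins: "insert l (insert k (s - {l})) = insert k s" using l by auto
    have "bd M c (insert k (s - {l})) = sg l (insert k (s - {l})) * c (insert k s) +
        (\<Sum>i\<in>A - {k}. sg i (insert k (s - {l})) * c (insert i (insert k (s - {l}))))"
    proof -
      have fAk: "finite (A - {k})" using fA by simp
      show ?thesis unfolding bd_def Meq sum.insert[OF fAk lA] ins ..
    qed
    moreover have "(\<Sum>i\<in>A - {k}. sg k (s - {l}) * sg l (s - {l}) * \<beta> k * (sg i (insert k (s - {l})) * c (insert i (insert k (s - {l}))))) =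
        (\<Sum>i\<in>A. if i \<noteq> k then T' i l k else 0)"
    proof -
      have Ak: "A - {k} = {i\<in>A. i \<noteq> k}" by auto
      show ?thesis unfolding Ak T'_def by (rule sum.inter_filter[OF fA])
    qed
    moreover have "sg k (s - {l}) * sg l (s - {l}) * \<beta> k * (sg l (insert k (s - {l})) * c (insert k s)) = - Z k"
    proof -
      have "sg k (s - {l}) * sg l (s - {l}) * \<beta> k * (sg l (insert k (s - {l})) * c (insert k s)) =
         (sg k (s - {l}) * sg l (s - {l}) * sg l (insert k (s - {l}))) * (\<beta> k * c (insert k s))"
        by (simp add: ac_simps)
      also have "\<dots> = - Z k" unfolding single_sign[OF fs l kS] Z_def by (simp add: ac_simps)
      finally show ?thesis .
    qed
    ultimately show ?thesis by (simp add: distrib_left sum_distrib_left)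
  qed
  have RHS: "Dop M R \<alpha> \<beta> (bd M c) s = \<alpha> s * bd M c s - (\<Sum>k\<in>A. of_nat (N2 k) * Z k)
      + (\<Sum>l\<in>s. \<Sum>k\<in>A. \<Sum>i\<in>A. if R k l \<and> i \<noteq> k then T' i l k else 0)"
  proof -
    have "Dop M R \<alpha> \<beta> (bd M c) s = \<alpha> s * bd M c s +
       (\<Sum>l\<in>s. \<Sum>k\<in>A. if R k l then sg k (s - {l}) * sg l (s - {l}) * \<beta> k * bd M c (insert k (s - {l})) else 0)"
    proof -
      have e: "{k\<in>M - s. R k l} = {k\<in>A. R k l}" for l unfolding A_def ..
      show ?thesis unfolding Dop_def e sum.inter_filter[OF fA] ..
    qed
    also have "\<dots> = \<alpha> s * bd M c s +
       (\<Sum>l\<in>s. \<Sum>k\<in>A. (if R k l then - Z k else 0) + (\<Sum>i\<in>A. if R k l \<and> i \<noteq> k then T' i l k else 0))"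
      by (intro arg_cong[where f="\<lambda>x. \<alpha> s * bd M c s + x"] sum.cong refl) (auto simp: R5)
    also have "\<dots> = \<alpha> s * bd M c s + (\<Sum>l\<in>s. \<Sum>k\<in>A. if R k l then - Z k else 0) +
       (\<Sum>l\<in>s. \<Sum>k\<in>A. \<Sum>i\<in>A. if R k l \<and> i \<noteq> k then T' i l k else 0)"
      by (simp add: sum.distrib)
    moreover have "(\<Sum>l\<in>s. \<Sum>k\<in>A. if R k l then - Z k else 0) = - (\<Sum>k\<in>A. of_nat (N2 k) * Z k)"
    proof -
      have "(\<Sum>l\<in>s. \<Sum>k\<in>A. if R k l then - Z k else 0) = (\<Sum>k\<in>A. \<Sum>l\<in>s. if R k l then - Z k else 0)"
        by (rule sum.swap)
      also have "\<dots> = (\<Sum>k\<in>A. of_nat (N2 k) * (- Z k))"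
        unfolding N2_def by (simp add: sum_if_const[OF fs])
      finally show ?thesis by (simp add: sum_negf)
    qed
    ultimately show ?thesis by simp
  qed
  have TR: "(\<Sum>i\<in>A. \<Sum>l\<in>s. \<Sum>k\<in>A. F i l k) = (\<Sum>l\<in>s. \<Sum>k\<in>A. \<Sum>i\<in>A. if R k l \<and> i \<noteq> k then T' i l k else 0)"
  proof -
    have FT: "F i l k = (if R k l \<and> i \<noteq> k then T' i l k else 0)" if "i \<in> A" "l \<in> s" "k \<in> A" for i l k
    proof (cases "k \<noteq> i \<and> R k l")
      case True
      have "sg i s * T i l k = T' i l k" unfolding T_def T'_def
        by (rule triple_sign[OF fs]) (use that True in \<open>auto simp: A_def\<close>)
      then show ?thesis using True unfolding F_def by auto
    next
      case False then show ?thesis unfolding F_def by auto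
    qed
    have "(\<Sum>i\<in>A. \<Sum>l\<in>s. \<Sum>k\<in>A. F i l k) = (\<Sum>l\<in>s. \<Sum>i\<in>A. \<Sum>k\<in>A. F i l k)"
      by (rule sum.swap)
    also have "\<dots> = (\<Sum>l\<in>s. \<Sum>k\<in>A. \<Sum>i\<in>A. F i l k)"
      by (rule sum.cong[OF refl]) (rule sum.swap)
    also have "\<dots> = (\<Sum>l\<in>s. \<Sum>k\<in>A. \<Sum>i\<in>A. if R k l \<and> i \<noteq> k then T' i l k else 0)"
      by (intro sum.cong refl) (simp add: FT)
    finally show ?thesis .
  qed
  have ZN: "(\<Sum>k\<in>A. of_nat (N1 k) * Z k) + (\<Sum>k\<in>A. of_nat (N2 k) * Z k) = (\<Sum>k\<in>A. Z k)"
  proof -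
    have "of_nat (N1 k) * Z k + of_nat (N2 k) * Z k = Z k" if k: "k \<in> A" for k
    proof (cases "\<beta> k = 0")
      case True then show ?thesis by (simp add: Z_def)
    next
      case False
      then have c1: "card {l\<in>M. R k l} = 1" using H2 k unfolding A_def by blast
      have U: "{l\<in>M. R k l} = {i\<in>A. i \<noteq> k \<and> R k i} \<union> {l\<in>s. R k l}" using s H3 unfolding A_def by auto
      have "N1 k + N2 k = card {l\<in>M. R k l}" unfolding N1_def N2_def U
        by (rule card_Un_disjoint[symmetric]) (use fA fs in \<open>auto simp: A_def\<close>)
      then have "N1 k + N2 k = 1" using c1 by simp
      then have "of_nat (N1 k) + of_nat (N2 k) = (1::'b)" by (metis of_nat_1 of_nat_add)
      then show ?thesis by (metis distrib_right mult_1)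
    qed
    then show ?thesis by (simp add: sum.distrib[symmetric])
  qed
  show ?thesis unfolding LHS RHS TR using ZN by (simp add: algebra_simps)
qed



lemma sum_nz_ex: "sum g A \<noteq> (0::'b::comm_monoid_add) \<Longrightarrow> \<exists>x\<in>A. g x \<noteq> 0"
proof (rule ccontr)
  assume "sum g A \<noteq> 0" "\<not> (\<exists>x\<in>A. g x \<noteq> 0)"
  then have "\<forall>x\<in>A. g x = 0" by blast
  then have "sum g A = 0" by (rule sum.neutral)
  then show False using \<open>sum g A \<noteq> 0\<close> by simp
qed

lemma Dop_nz:
  assumes "Dop M R \<alpha> \<beta> c w \<noteq> 0"
  shows "(c w \<noteq> 0 \<and> \<alpha> w \<noteq> 0) \<or> (\<exists>l\<in>w. \<exists>k\<in>M - w. R k l \<and> c (insert k (w - {l})) \<noteq> 0)"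
proof (rule ccontr)
  assume H: "\<not> ?thesis"
  then have a: "\<alpha> w * c w = 0" by auto
  have "(\<Sum>l\<in>w. \<Sum>k\<in>{k\<in>M - w. R k l}. sg k (w - {l}) * sg l (w - {l}) * \<beta> k * c (insert k (w - {l}))) = 0"
  proof (intro sum.neutral ballI)
    fix l k assume l: "l \<in> w" and k: "k \<in> {k\<in>M - w. R k l}"
    then have "c (insert k (w - {l})) = 0" using H by blast
    then show "sg k (w - {l}) * sg l (w - {l}) * \<beta> k * c (insert k (w - {l})) = 0" by simp
  qed
  then show False using assms a unfolding Dop_def by simp
qed

lemma fprod_swap:
  assumes "finite w" "l \<in> w" "k \<notin> w"
  shows "fprod f (insert k (w - {l})) + f l = fprod f w + f k"
proof -
  have w: "w = insert l (w - {l})" using assms(2) by auto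
  have f1: "fprod f w = f l + fprod f (w - {l})" by (subst w, rule fprod_insert) (use assms in auto)
  have f2: "fprod f (insert k (w - {l})) = f k + fprod f (w - {l})" by (rule fprod_insert) (use assms in auto)
  show ?thesis unfolding f1 f2 by (simp add: ac_simps)
qed

lemma fprod_swap_var:
  assumes "finite w" "l \<in> w" "k \<notin> w" "f k + var i = f l + var j"
  shows "fprod f (insert k (w - {l})) + var i = fprod f w + var j"
proof -
  have "fprod f (insert k (w - {l})) + var i + f l = fprod f w + f k + var i"
    using fprod_swap[OF assms(1-3), of f] by (simp add: ac_simps)
  also have "\<dots> = fprod f w + (f k + var i)" by (simp add: ac_simps)
  also have "\<dots> = fprod f w + (f l + var j)" by (simp only: assms(4))
  also have "\<dots> = fprod f w + var j + f l" by (simp add: ac_simps)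
  finally show ?thesis by simp
qed

lemma card_swap:
  assumes "finite w" "l \<in> w" "k \<notin> w"
  shows "card (insert k (w - {l})) = card w"
  using assms by (simp add: card_Diff_singleton) (metis Suc_pred card_gt_0_iff empty_iff)

lemma is_mon_fprod: "\<forall>i\<in>u. is_mon n (f i) \<Longrightarrow> is_mon n (fprod f u)"
  unfolding fprod_def by (induction u rule: infinite_finite_induct) auto

lemma mdvd_var_cancel: "mdvd (a + var k) (b + var k) \<Longrightarrow> mdvd a b"
  by (rule mdvd_cancel)

lemma borel_step:
  assumes "borel_fixed n I" "is_mon n v" "1 \<le> i" "i < j" "j \<le> n" "monom (v + var j) \<in> I"
  shows "monom (v + var i) \<in> I"
proof -
  have "\<forall>v i j. is_mon n v \<longrightarrow> 1 \<le> i \<longrightarrow> i < j \<longrightarrow> j \<le> n \<longrightarrow>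
        monom (v + var j) \<in> I \<longrightarrow> monom (v + var i) \<in> I"
    using assms(1) unfolding borel_fixed_def by (rule conjunct2)
  then show ?thesis using assms(2-6) by blast
qed

lemma unique_gen:
  fixes I :: "'b::comm_ring_1 mpoly set"
  assumes I_borel: "borel_fixed n I"
    and f_mon: "\<forall>i\<in>{1..m}. is_mon n (f i)"
    and f_gen: "I = ideal_gen n (monom ` f ` {1..m})"
    and f_minimal: "\<forall>i\<in>{1..m}. \<forall>j\<in>{1..m}. i \<noteq> j \<longrightarrow> \<not> mdvd (f i) (f j)"
    and f_deg: "\<forall>i\<in>{1..m}. \<forall>j\<in>{1..m}. mdeg (f i) = mdeg (f j)"
    and ij: "1 \<le> i" "i < j" "j \<le> n"
    and k: "k \<in> {1..m}" and kj: "Poly_Mapping.lookup (f k) j \<noteq> 0"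
  shows "card {l\<in>{1..m}. f k + var i = f l + var j} = 1"
proof -
  obtain a where a: "f k = a + var j" using split_var[of "f k" j] kj by auto
  have amon: "is_mon n a" using f_mon k a by (metis is_mon_add)
  have "monom (f k) \<in> I" unfolding f_gen using k by (auto intro: ideal_gen.ig_gen)
  then have "monom (a + var j) \<in> I" using a by simp
  then have "monom (a + var i) \<in> I" by (rule borel_step[OF I_borel amon ij])
  then have "monom (a + var i) \<in> ideal_gen n ({} \<union> (monom ` (f ` {1..m}) :: 'b mpoly set))" using f_gen by simp
  then have "Pgen ({} :: 'b mpoly set) (f ` {1..m}) (a + var i)"
    using jset.monom_in_gen_D[OF empty_jset] f_mon by blast
  then have "\<exists>w\<in>f ` {1..m}. mdvd w (a + var i)" unfolding Pgen_def by blast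
  then obtain w where w: "w \<in> f ` {1..m}" "mdvd w (a + var i)" by blast
  then obtain l where l0: "l \<in> {1..m}" "w = f l" by blast
  then have l: "l \<in> {1..m}" "mdvd (f l) (a + var i)" using w(2) by simp_all
  have "mdeg (f l) = mdeg (f k)" using f_deg l(1) k by blast
  also have "\<dots> = mdeg a + 1" unfolding a by (simp add: mdeg_add)
  also have "\<dots> = mdeg (a + var i)" by (simp add: mdeg_add)
  finally have "mdeg (f l) = mdeg (a + var i)" .
  then have fl: "f l = a + var i" using l(2) by (rule mdvd_eq_deg[rotated])
  have eq: "{l\<in>{1..m}. f k + var i = f l + var j} = {l}"
  proof
    show "{l} \<subseteq> {l\<in>{1..m}. f k + var i = f l + var j}" using l(1) fl a by (simp add: ac_simps)
    show "{l\<in>{1..m}. f k + var i = f l + var j} \<subseteq> {l}"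
    proof
      fix l' assume l': "l' \<in> {l\<in>{1..m}. f k + var i = f l + var j}"
      then have "f k + var i = f l' + var j" by simp
      then have "f l' + var j = f l + var j" unfolding fl a by (simp add: ac_simps)
      then have "f l' = f l" by simp
      moreover have "l' \<in> {1..m}" using l' by simp
      ultimately have "l' = l" using f_minimal l(1) mdvd_refl by metis
      then show "l' \<in> {l}" by simp
    qed
  qed
  show ?thesis unfolding eq by simp
qed



lemma e_gt_from_revlex: "revlex_gt (fprod f w) (fprod f u) \<Longrightarrow> e_gt f u w"
  unfolding e_gt_def by simp

lemma lemmaB:
  fixes c :: "nat set \<Rightarrow> 'b::field_char_0" and I J :: "'b mpoly set"
  assumes I_borel: "borel_fixed n I" and J_borel: "borel_fixed n J"
    and f_mon: "\<forall>i\<in>{1..m}. is_mon n (f i)"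
    and f_gen: "I = ideal_gen n (monom ` f ` {1..m})"
    and f_minimal: "\<forall>i\<in>{1..m}. \<forall>j\<in>{1..m}. i \<noteq> j \<longrightarrow> \<not> mdvd (f i) (f j)"
    and f_deg: "\<forall>i\<in>{1..m}. \<forall>j\<in>{1..m}. mdeg (f i) = mdeg (f j)"
    and ij: "1 \<le> i" "i < j" "j \<le> n"
    and cc: "ccyc m f J t (d0 + var j) c" and cu: "c u \<noteq> 0" and lead: "\<forall>w. e_gt f w u \<longrightarrow> c w = 0"
    and d0: "d0 = fprod f u + v0" and dmon: "is_mon n d0"
    and nJ: "monom (v0 + var i) \<notin> J"
  shows "\<exists>c'. ccyc m f J t (d0 + var i) c' \<and> c' u \<noteq> 0 \<and> (\<forall>w. e_gt f w u \<longrightarrow> c' w = 0)"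
proof -
  define M where "M = {1..m}"
  define d where "d = d0 + var j"
  define d' where "d' = d0 + var i"
  define \<alpha> :: "nat set \<Rightarrow> 'b" where "\<alpha> w = of_nat (Poly_Mapping.lookup (d - fprod f w) j)" for w
  define \<beta> :: "nat \<Rightarrow> 'b" where "\<beta> k = of_nat (Poly_Mapping.lookup (f k) j)" for k
  define R where "R k l = (k \<in> M \<and> l \<in> M \<and> f k + var i = f l + var j)" for k l
  define Dc where "Dc = Dop M R \<alpha> \<beta> c"
  define c' where "c' w = (if w \<subseteq> M \<and> card w = t \<and> mdvd (fprod f w) d' \<and> monom (d' - fprod f w) \<notin> J then Dc w else 0)" for w
  have fM: "finite M" unfolding M_def by simp
  have ijne: "i \<noteq> j" using ij by simp
  have JS: "jset n J" using J_borel unfolding borel_fixed_def by (intro monomial_ideal_jset) blast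
  have dmon': "is_mon n d" unfolding d_def using dmon ij by simp
  have dd': "d + var i = d' + var j" unfolding d_def d'_def by (simp add: ac_simps)
  have cnz: "w \<subseteq> M \<and> card w = t \<and> mdvd (fprod f w) d \<and> monom (d - fprod f w) \<notin> J" if "c w \<noteq> 0" for w
    using ccyc_nz[OF cc that] unfolding M_def d_def .
  have csum: "bd M c s = 0" if "finite s" "mdvd (fprod f s) d" "monom (d - fprod f s) \<notin> J" for s
    using ccyc_sum[OF cc, of s] that unfolding bd_def M_def d_def sg_def by simp
  have fin_of: "finite w" if "w \<subseteq> M" for w using that fM finite_subset by blast

  have A: "w \<subseteq> M \<and> card w = t \<and> mdvd (fprod f w) d'" if nz: "Dc w \<noteq> 0" for w
  proof -
    have "(c w \<noteq> 0 \<and> \<alpha> w \<noteq> 0) \<or> (\<exists>l\<in>w. \<exists>k\<in>M - w. R k l \<and> c (insert k (w - {l})) \<noteq> 0)"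
      using Dop_nz nz unfolding Dc_def by blast
    then show ?thesis
    proof
      assume H: "c w \<noteq> 0 \<and> \<alpha> w \<noteq> 0"
      then have cw: "w \<subseteq> M \<and> card w = t \<and> mdvd (fprod f w) d" using cnz by blast
      have "Poly_Mapping.lookup (d - fprod f w) j \<noteq> 0" using H unfolding \<alpha>_def by auto
      then obtain e where e: "d - fprod f w = e + var j" using split_var by (metis One_nat_def less_one not_less)
      have "d = fprod f w + (d - fprod f w)" using cw mdvd_diff by metis
      then have "d = fprod f w + (e + var j)" unfolding e .
      then have "d0 + var j = fprod f w + e + var j" unfolding d_def by (simp add: ac_simps)
      then have "d0 = fprod f w + e" by simp
      then have "mdvd (fprod f w) d'" unfolding d'_def mdvd_def by (metis add.assoc)
      then show ?thesis using cw by blast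
    next
      assume "\<exists>l\<in>w. \<exists>k\<in>M - w. R k l \<and> c (insert k (w - {l})) \<noteq> 0"
      then obtain l k where l: "l \<in> w" and k: "k \<in> M - w" and Rkl: "R k l" and cn: "c (insert k (w - {l})) \<noteq> 0"
        by blast
      have cu': "insert k (w - {l}) \<subseteq> M \<and> card (insert k (w - {l})) = t \<and> mdvd (fprod f (insert k (w - {l}))) d"
        using cnz[OF cn] by blast
      have "finite (insert k (w - {l}))" using cu' fin_of by blast
      then have fw: "finite w" by (metis finite_Diff2 finite_insert finite.emptyI)
      have lM: "l \<in> M" using Rkl unfolding R_def by blast
      have wM: "w \<subseteq> M" using cu' lM l by auto
      have kw: "k \<notin> w" using k by blast
      have cw: "card w = t" using card_swap[OF fw l kw] cu' by simp
      have fe: "fprod f (insert k (w - {l})) + var i = fprod f w + var j"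
        using fprod_swap_var[OF fw l kw] Rkl unfolding R_def by blast
      have "mdvd (fprod f (insert k (w - {l})) + var i) (d + var i)" using cu' by (blast intro: mdvd_add_mono)
      then have "mdvd (fprod f w + var j) (d' + var j)" unfolding fe dd' .
      then have "mdvd (fprod f w) d'" by (rule mdvd_cancel)
      then show ?thesis using wM cw by blast
    qed
  qed

  have B: "monom (d' - fprod f s) \<in> J" if B1: "monom (d' - fprod f (insert x s)) \<in> J" and B2: "mdvd (fprod f (insert x s)) d'"
     and B3: "finite s" and B4: "x \<notin> s" and B5: "x \<in> M" for x s
  proof -
    have fi: "fprod f (insert x s) = f x + fprod f s" using B3 B4 by (rule fprod_insert)
    obtain e where e: "d' = f x + fprod f s + e" using B2 unfolding fi mdvd_def by blast
    have e1: "d' - fprod f (insert x s) = e" unfolding fi e by simp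
    have "d' = fprod f s + (f x + e)" unfolding e by (simp add: ac_simps)
    then have e2: "d' - fprod f s = f x + e" by simp
    have "is_mon n (f x)" using f_mon B5 unfolding M_def by blast
    then show ?thesis unfolding e2 using jset.J_up[OF JS] B1 unfolding e1 by blast
  qed

  have bd0: "bd M c s = 0" if fs: "finite s" and md': "mdvd (fprod f s) d'" and nJ': "monom (d' - fprod f s) \<notin> J" for s
  proof (cases "mdvd (fprod f s) d")
    case True
    have "monom (d - fprod f s) \<notin> J"
    proof
      assume inJ: "monom (d - fprod f s) \<in> J"
      define e where "e = d - fprod f s"
      define e' where "e' = d' - fprod f s"
      have h1: "fprod f s + e = d" unfolding e_def using True by (rule mdvd_diff)
      have h2: "fprod f s + e' = d'" unfolding e'_def using md' by (rule mdvd_diff)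
      have "fprod f s + (e + var i) = fprod f s + (e' + var j)" using h1 h2 dd' by (simp add: add.assoc[symmetric])
      then have ee: "e + var i = e' + var j" by simp
      have "Poly_Mapping.lookup e j \<ge> 1"
        using arg_cong[OF ee, of "\<lambda>p. Poly_Mapping.lookup p j"] ijne by (simp add: lookup_add lookup_var)
      then obtain e0 where e0: "e = e0 + var j" using split_var by blast
      have "e0 + var i + var j = e' + var j" using ee unfolding e0 by (simp add: ac_simps)
      then have e'0: "e' = e0 + var i" by simp
      have "is_mon n e" unfolding e_def by (rule is_mon_minus[OF dmon'])
      then have "is_mon n e0" unfolding e0 by simp
      moreover have "monom (e0 + var j) \<in> J" using inJ unfolding e_def[symmetric] e0 .
      ultimately have "monom (e0 + var i) \<in> J" using borel_step[OF J_borel _ ij] by blast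
      then show False using nJ' unfolding e'_def[symmetric] e'0 by simp
    qed
    then show ?thesis using csum fs True by blast
  next
    case False
    show ?thesis unfolding bd_def
    proof (rule sum.neutral, rule ballI)
      fix x assume x: "x \<in> M - s"
      have "c (insert x s) = 0"
      proof (rule ccontr)
        assume "c (insert x s) \<noteq> 0"
        then have "mdvd (fprod f (insert x s)) d" using cnz by blast
        moreover have "fprod f (insert x s) = fprod f s + f x" using fprod_insert[OF fs, of x f] x by (simp add: add.commute)
        ultimately have "mdvd (fprod f s) d" using mdvd_trans mdvd_add_right by metis
        then show False using False by simp
      qed
      then show "sg x s * c (insert x s) = 0" by simp
    qed
  qed
  have bd1: "bd M c (insert k (s - {l})) = 0" if fs: "finite s" and md': "mdvd (fprod f s) d'" and nJ': "monom (d' - fprod f s) \<notin> J"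
    and l: "l \<in> s" and k: "k \<notin> s" and Rkl: "R k l" for s k l
  proof -
    let ?s' = "insert k (s - {l})"
    have fe: "fprod f ?s' + var i = fprod f s + var j"
      using fprod_swap_var[OF fs l k] Rkl unfolding R_def by blast
    define e' where "e' = d' - fprod f s"
    have h2: "fprod f s + e' = d'" unfolding e'_def using md' by (rule mdvd_diff)
    have "d + var i = fprod f ?s' + var i + e'" unfolding dd' fe h2[symmetric] by (simp add: ac_simps)
    then have "d + var i = (fprod f ?s' + e') + var i" by (simp add: ac_simps)
    then have h3: "d = fprod f ?s' + e'" by (rule add_right_imp_eq)
    then have "mdvd (fprod f ?s') d" unfolding mdvd_def by blast
    moreover have "d - fprod f ?s' = e'" using h3 by simp
    moreover have "finite ?s'" using fs by simp
    ultimately show ?thesis using csum nJ' unfolding e'_def by metis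
  qed

  have H3: "\<forall>k. \<not> R k k"
  proof (intro allI notI)
    fix k assume "R k k"
    then have "f k + var i = f k + var j" unfolding R_def by blast
    then have "var i = var j" by simp
    then have "Poly_Mapping.lookup (var i) i = Poly_Mapping.lookup (var j) i" by simp
    then show False using ijne by (simp add: lookup_var)
  qed
  have CC: "ccyc m f J t d' c'"
    unfolding ccyc_def
  proof (intro conjI allI impI)
    fix w assume "c' w \<noteq> 0"
    then show "w \<subseteq> {1..m}" "card w = t" "mdvd (fprod f w) d'" "monom (d' - fprod f w) \<notin> J"
      unfolding c'_def M_def by (auto split: if_splits)
  next
    fix s assume fs: "finite s" and md': "mdvd (fprod f s) d'" and nJ': "monom (d' - fprod f s) \<notin> J"
    have ceq: "c' (insert x s) = Dc (insert x s)" if x: "x \<in> M - s" for x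
    proof (cases "Dc (insert x s) = 0")
      case True then show ?thesis unfolding c'_def by simp
    next
      case False
      note a = A[OF False]
      have "monom (d' - fprod f (insert x s)) \<notin> J"
        using B[of x s] a fs x nJ' by blast
      then show ?thesis using a unfolding c'_def by simp
    qed
    have "(\<Sum>x\<in>{1..m} - s. (-1) ^ card {j\<in>s. j < x} * c' (insert x s)) = bd M Dc s"
      unfolding bd_def sg_def M_def[symmetric] by (rule sum.cong[OF refl]) (simp add: ceq)
    also have "\<dots> = 0"
    proof (cases "s \<subseteq> M")
      case False
      show ?thesis unfolding bd_def
      proof (rule sum.neutral, rule ballI)
        fix x assume x: "x \<in> M - s"
        have "Dc (insert x s) = 0" using A[of "insert x s"] False by blast
        then show "sg x s * Dc (insert x s) = 0" by simp
      qed
    next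
      case True
      have H1: "\<forall>x\<in>M - s. c (insert x s) \<noteq> 0 \<longrightarrow> \<alpha> (insert x s) = \<alpha> s - \<beta> x"
      proof (intro ballI impI)
        fix x assume x: "x \<in> M - s" and cx: "c (insert x s) \<noteq> 0"
        have fi: "fprod f (insert x s) = f x + fprod f s" using fs x by (simp add: fprod_insert)
        obtain r where r: "d = f x + fprod f s + r" using cnz[OF cx] unfolding fi mdvd_def by blast
        have r1: "d - fprod f (insert x s) = r" unfolding fi r by simp
        have "d = fprod f s + (f x + r)" unfolding r by (simp add: ac_simps)
        then have r2: "d - fprod f s = f x + r" by simp
        show "\<alpha> (insert x s) = \<alpha> s - \<beta> x"
          unfolding \<alpha>_def \<beta>_def r1 r2 by (simp add: lookup_add)
      qed
      have H2: "\<forall>k\<in>M - s. \<beta> k \<noteq> 0 \<longrightarrow> card {l\<in>M. R k l} = 1"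
      proof (intro ballI impI)
        fix k assume k: "k \<in> M - s" and bk: "\<beta> k \<noteq> 0"
        then have kj: "Poly_Mapping.lookup (f k) j \<noteq> 0" unfolding \<beta>_def by auto
        have "{l\<in>M. R k l} = {l\<in>{1..m}. f k + var i = f l + var j}" using k unfolding R_def M_def by auto
        then show "card {l\<in>M. R k l} = 1"
          using unique_gen[OF I_borel f_mon f_gen f_minimal f_deg ij _ kj] k unfolding M_def by simp
      qed
      have "bd M Dc s = Dop M R \<alpha> \<beta> (bd M c) s"
        unfolding Dc_def by (rule Dop_comm[OF fM True H1 H2 H3])
      also have "\<dots> = 0"
      proof -
        have z1: "bd M c s = 0" using bd0 fs md' nJ' by blast
        have z2: "(\<Sum>l\<in>s. \<Sum>k\<in>{k\<in>M - s. R k l}. sg k (s - {l}) * sg l (s - {l}) * \<beta> k * bd M c (insert k (s - {l}))) = 0"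
        proof (intro sum.neutral ballI)
          fix l k assume l: "l \<in> s" and k: "k \<in> {k\<in>M - s. R k l}"
          have "bd M c (insert k (s - {l})) = 0" using bd1[OF fs md' nJ' l] k by blast
          then show "sg k (s - {l}) * sg l (s - {l}) * \<beta> k * bd M c (insert k (s - {l})) = 0" by simp
        qed
        show ?thesis unfolding Dop_def z1 z2 by simp
      qed
      finally show ?thesis .
    qed
    finally show "(\<Sum>x\<in>{1..m} - s. (-1) ^ card {j\<in>s. j < x} * c' (insert x s)) = 0" .
  qed

  have cuu: "u \<subseteq> M \<and> card u = t" using cnz[OF cu] by blast
  have fu: "finite u" using cuu fin_of by blast
  have sums0: "(\<Sum>l\<in>w. \<Sum>k\<in>{k\<in>M - w. R k l}. sg k (w - {l}) * sg l (w - {l}) * \<beta> k * c (insert k (w - {l}))) = 0"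
    if H: "\<And>l k. l \<in> w \<Longrightarrow> k \<in> M - w \<Longrightarrow> R k l \<Longrightarrow> c (insert k (w - {l})) = 0" for w
  proof (intro sum.neutral ballI)
    fix l k assume "l \<in> w" "k \<in> {k\<in>M - w. R k l}"
    then have "c (insert k (w - {l})) = 0" using H by blast
    then show "sg k (w - {l}) * sg l (w - {l}) * \<beta> k * c (insert k (w - {l})) = 0" by simp
  qed
  have CU: "c' u \<noteq> 0"
  proof -
    have d'u: "d' = fprod f u + (v0 + var i)" unfolding d'_def d0 by (simp add: ac_simps)
    have du: "d = fprod f u + (v0 + var j)" unfolding d_def d0 by (simp add: ac_simps)
    have m1: "mdvd (fprod f u) d'" unfolding d'u by (rule mdvd_add_right)
    have m2: "d' - fprod f u = v0 + var i" unfolding d'u by simp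
    have z: "c (insert k (u - {l})) = 0" if l: "l \<in> u" and k: "k \<in> M - u" and Rkl: "R k l" for l k
    proof -
      have fe: "fprod f (insert k (u - {l})) + var i = fprod f u + var j"
        using fprod_swap_var[OF fu l, of k] k Rkl unfolding R_def by blast
      have "revlex_gt (fprod f u) (fprod f (insert k (u - {l})))"
        by (rule revlex_shift[OF _ fe[symmetric] ij(2)]) simp
      then have "e_gt f (insert k (u - {l})) u" by (rule e_gt_from_revlex)
      then show ?thesis using lead by blast
    qed
    have "Dc u = \<alpha> u * c u" unfolding Dc_def Dop_def using sums0[OF z] by simp
    moreover have "\<alpha> u \<noteq> 0"
    proof -
      have "Poly_Mapping.lookup (d - fprod f u) j = Suc (Poly_Mapping.lookup v0 j)"
        unfolding du by (simp add: lookup_add lookup_var)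
      then show ?thesis unfolding \<alpha>_def by (simp only: of_nat_neq_0) simp
    qed
    ultimately have "Dc u \<noteq> 0" using cu by simp
    then show ?thesis unfolding c'_def using cuu m1 m2 nJ by simp
  qed

  have LE: "\<forall>w. e_gt f w u \<longrightarrow> c' w = 0"
  proof (intro allI impI)
    fix w assume ewu: "e_gt f w u"
    show "c' w = 0"
    proof (cases "w \<subseteq> M")
      case False then show ?thesis unfolding c'_def by simp
    next
      case True
      have fw: "finite w" using True fin_of by blast
      have z: "c (insert k (w - {l})) = 0" if l: "l \<in> w" and k: "k \<in> M - w" and Rkl: "R k l" for l k
      proof (rule ccontr)
        let ?u' = "insert k (w - {l})"
        assume cn: "c ?u' \<noteq> 0"
        have fe: "fprod f ?u' + var i = fprod f w + var j"
          using fprod_swap_var[OF fw l, of k] k Rkl unfolding R_def by blast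
        have nu: "\<not> e_gt f ?u' u" using lead cn by blast
        have fu': "finite ?u'" using cnz[OF cn] fin_of by blast
        have "revlex_gt (fprod f ?u') (fprod f u) \<or> fprod f ?u' = fprod f u"
        proof (cases "?u' = u")
          case True then show ?thesis by simp
        next
          case False
          then have "e_gt f u ?u'" using e_gt_total[OF fu' fu False] nu by blast
          then show ?thesis unfolding e_gt_def by (metis (no_types))
        qed
        then have "revlex_gt (fprod f w) (fprod f u)"
          by (rule revlex_shift[OF _ fe[symmetric] ij(2)])
        then have "e_gt f u w" by (rule e_gt_from_revlex)
        then show False using ewu e_gt_asym by blast
      qed
      have "c w = 0" using lead ewu by blast
      then have "Dc w = 0" unfolding Dc_def Dop_def using sums0[OF z] by simp
      then show ?thesis unfolding c'_def by simp
    qed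
  qed
  show ?thesis using CC CU LE unfolding d'_def by blast
qed



theorem lemma4p2:
  fixes n m t :: nat
    and f :: "nat \<Rightarrow> mon"
    and I J :: "'a::field_char_0 mpoly set"
    and u :: "nat set"
  assumes I_borel: "borel_fixed n I"
    and J_borel: "borel_fixed n J"
    and f_mon: "\<forall>i\<in>{1..m}. is_mon n (f i)"
    and f_gen: "I = ideal_gen n (monom ` f ` {1..m})"
    and f_minimal: "\<forall>i\<in>{1..m}. \<forall>j\<in>{1..m}. i \<noteq> j \<longrightarrow> \<not> mdvd (f i) (f j)"
    and f_deg: "\<forall>i\<in>{1..m}. \<forall>j\<in>{1..m}. mdeg (f i) = mdeg (f j)"
    and u_sub: "u \<subseteq> {1..m}" and u_card: "card u = t"
  shows "borel_fixed n (L_ideal n f J (cycles n m f J t) u)"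
proof -
  define N where "N = cycles n m f J t"
  define W where "W = {v. is_mon n v \<and> term_elem J (u, v) \<in> init_module n f J N}"
  have Wmon: "\<forall>w\<in>W. is_mon n w" unfolding W_def by blast
  have Leq: "L_ideal n f J N u = ideal_gen n (J \<union> monom ` W)"
  proof -
    have e: "{monom v |v. is_mon n v \<and> term_elem J (u, v) \<in> init_module n f J N} = (monom ` W :: 'a mpoly set)"
      unfolding W_def by blast
    show ?thesis unfolding L_ideal_def e ..
  qed
  have JS: "jset n J" using J_borel unfolding borel_fixed_def by (intro monomial_ideal_jset) blast
  have MI: "monomial_ideal n (ideal_gen n (J \<union> monom ` W))" by (rule ideal_gen_ideal[OF JS Wmon])
  have Pup: "Pgen J W (v + r)" if P1: "Pgen J W v" and P2: "is_mon n r" for v r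
  proof (cases "monom v \<in> J")
    case True
    then have "monom (r + v) \<in> J" using jset.J_up[OF JS] P2 by blast
    then show ?thesis unfolding Pgen_def by (simp add: add.commute)
  next
    case False
    then obtain w where w: "w \<in> W" "mdvd w v" using P1 unfolding Pgen_def by blast
    have "mdvd w (v + r)" using w(2) by (rule mdvd_mono)
    then show ?thesis using w(1) unfolding Pgen_def by blast
  qed
  have inW: "w0 \<in> W" if g: "g \<in> N" "g \<noteq> (\<lambda>_. 0)" "init_term f g = (u, w0)" for g w0
  proof -
    have "term_elem J (init_term f g) \<in> init_module n f J N" by (rule term_elem_in_init[OF g(1,2)])
    moreover have "is_mon n w0" using extract_cyc[OF g(1)[unfolded N_def] g(2,3)] by blast
    ultimately show ?thesis unfolding W_def g(3) by blast
  qed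
  have key: "Pgen J W (w1 + var i)"
    if g: "g \<in> N" "g \<noteq> (\<lambda>_. 0)" "init_term f g = (u, w1 + var j)" and ij: "1 \<le> i" "i < j" "j \<le> n" for g w1 i j
  proof (cases "monom (w1 + var i) \<in> J")
    case True then show ?thesis unfolding Pgen_def by blast
  next
    case False
    define d where "d = fprod f u + (w1 + var j)"
    define cg where "cg = (\<lambda>w. if mdvd (fprod f w) d then Poly_Mapping.lookup (g w) (d - fprod f w) else 0)"
    have E: "u \<subseteq> {1..m} \<and> card u = t \<and> is_mon n (w1 + var j) \<and> monom (w1 + var j) \<notin> J \<and>
      ccyc m f J t d cg \<and> cg u \<noteq> 0 \<and> (\<forall>w. e_gt f w u \<longrightarrow> cg w = 0)"
      using extract_cyc[OF g(1)[unfolded N_def] g(2,3)] unfolding d_def cg_def by blast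
    define d0 where "d0 = fprod f u + w1"
    have dd: "d = d0 + var j" unfolding d_def d0_def by (simp add: ac_simps)
    have fu: "is_mon n (fprod f u)" using is_mon_fprod[of u n f] f_mon u_sub by blast
    have d0m: "is_mon n d0" unfolding d0_def using fu E by simp
    obtain c' where c': "ccyc m f J t (d0 + var i) c'" "c' u \<noteq> 0" "\<forall>w. e_gt f w u \<longrightarrow> c' w = 0"
      using lemmaB[OF I_borel J_borel f_mon f_gen f_minimal f_deg ij, of t "d0" cg u w1] E dd d0_def d0m False
      by blast
    have dm: "is_mon n (d0 + var i)" using d0m ij by simp
    obtain g' where g': "g' \<in> cycles n m f J t" "g' \<noteq> (\<lambda>_. 0)" "init_term f g' = (u, d0 + var i - fprod f u)"
      using realize[OF c' dm] by blast
    have "d0 + var i - fprod f u = w1 + var i" unfolding d0_def by (simp add: add.assoc)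
    then have "w1 + var i \<in> W" using inW[of g' "w1 + var i"] g' unfolding N_def by simp
    moreover have "mdvd (w1 + var i) (w1 + var i)" by (rule mdvd_refl)
    ultimately show ?thesis unfolding Pgen_def by blast
  qed
  have BF: "monom (v + var i) \<in> ideal_gen n (J \<union> monom ` W)"
    if v: "is_mon n v" and ij: "1 \<le> i" "i < j" "j \<le> n" and vj: "monom (v + var j) \<in> ideal_gen n (J \<union> monom ` W)"
    for v i j
  proof -
    have vi: "is_mon n (v + var i)" using v ij by simp
    have P: "Pgen J W (v + var j)" by (rule jset.monom_in_gen_D[OF JS Wmon vj])
    have "Pgen J W (v + var i)"
    proof (cases "monom (v + var j) \<in> J")
      case True
      then have "monom (v + var i) \<in> J" using borel_step[OF J_borel v ij] by blast
      then show ?thesis unfolding Pgen_def by blast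
    next
      case False
      then obtain w where w: "w \<in> W" "mdvd w (v + var j)" using P unfolding Pgen_def by blast
      have wJ: "monom w \<notin> J"
      proof
        assume "monom w \<in> J"
        obtain s where s: "v + var j = w + s" using w(2) unfolding mdvd_def by blast
        have "is_mon n (v + var j)" using v ij by simp
        then have "is_mon n (w + s)" unfolding s .
        then have "is_mon n s" by simp
        then have "monom (s + w) \<in> J" using jset.J_up[OF JS] \<open>monom w \<in> J\<close> by blast
        then show False using False s by (simp add: add.commute)
      qed
      have tW: "term_elem J (u, w) \<in> init_module n f J N" using w(1) unfolding W_def by blast
      have "Poly_Mapping.lookup (term_elem J (u, w) u) w = 1"
        unfolding term_elem_def using wJ by (simp add: lookup_nf monom_def)
      then obtain g where g: "g \<in> N" "g \<noteq> (\<lambda>_. 0)" "fst (init_term f g) = u" "mdvd (snd (init_term f g)) w"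
        using init_module_char[OF tW, of u w] by auto
      define w0 where "w0 = snd (init_term f g)"
      have it: "init_term f g = (u, w0)" using g(3) unfolding w0_def by (metis prod.collapse)
      have w0W: "w0 \<in> W" using inW[OF g(1,2) it] .
      have "mdvd w0 (v + var j)" using g(4) w(2) unfolding w0_def by (rule mdvd_trans)
      then obtain r where r: "v + var j = w0 + r" unfolding mdvd_def by blast
      have w0m: "is_mon n w0" using w0W Wmon by blast
      have "is_mon n (v + var j)" using v ij by simp
      then have "is_mon n (w0 + r)" unfolding r .
      then have rm: "is_mon n r" by simp
      show ?thesis
      proof (cases "Poly_Mapping.lookup r j \<ge> 1")
        case True
        then obtain r' where r': "r = r' + var j" using split_var by blast
        have "v = w0 + r'" using r unfolding r' by (simp add: add.assoc[symmetric])
        then have "v + var i = w0 + (r' + var i)" by (simp add: add.assoc)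
        moreover have "mdvd w0 (w0 + (r' + var i))" by (rule mdvd_add_right)
        ultimately show ?thesis using w0W unfolding Pgen_def by auto
      next
        case False
        have "Poly_Mapping.lookup (v + var j) j = Poly_Mapping.lookup (w0 + r) j" using r by simp
        then have "Poly_Mapping.lookup w0 j \<ge> 1" using False by (simp add: lookup_add lookup_var)
        then obtain w1 where w1: "w0 = w1 + var j" using split_var by blast
        have "v + var j = (w1 + r) + var j" using r unfolding w1 by (simp add: ac_simps)
        then have vr: "v = w1 + r" by simp
        have "Pgen J W (w1 + var i)" using key[OF g(1,2) _ ij] it unfolding w1 by blast
        then have "Pgen J W ((w1 + var i) + r)" using Pup rm by blast
        then show ?thesis unfolding vr by (simp add: ac_simps)
      qed
    qed
    then show ?thesis by (rule jset.monom_in_gen_I[OF JS vi])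
  qed
  show ?thesis
    unfolding N_def[symmetric] Leq borel_fixed_def
    using MI BF by blast
qed


end
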